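(* Let $\Delta$ be a simplicial complex of subsets of $\{1,\dots,n\}$ and let $\mathcal L$ be the intersection of the facets (maximal faces) of $\Delta$. If $f$ is any binomial of degree $s$ in $Q_\Delta$, then $L_{\mathcal L}^s\cdot\tau_\Delta(f)\subseteq I_\Delta$, i.e. $\tau_\Delta(f)\in(I_\Delta:L_{\mathcal L}^s)$. In particular, $\tau_\Delta(Q_\Delta)\subseteq(I_\Delta:x_{+,\dots,+}^\infty)$.
   Context: $\mathbb K$ is a field, $a_1,\dots,a_n$ positive integers, $R=\mathbb K[x_{i_1,\dots,i_n}:1\le i_j\le a_j]$, $A=(x_{i_1,\dots,i_n})$ the generic table. For a tuple $\sigma$ with $\sigma_j\in\{1,\dots,a_j\}\cup\{+\}$, $x_\sigma$ is the sum of all $x_{i_1,\dots,i_n}$ with $i_j=\sigma_j$ whenever $\sigma_j\ne+$; $x_{+,\dots,+}$ is the sum of all variables. For $\mathscr J=\{j_1<\dots<j_m\}\subseteq\{1,\dots,n\}$, the margin $A_{\mathscr J}$ is the table whose $(i_1,\dots,i_m)$ entry is $x_\sigma$ with $\sigma_{j_r}=i_r$ and $\sigma_j=+$ for $j\notin\mathscr J$; $L_{\mathscr J}\subseteq R$ is the ideal generated by the entries of $A_{\mathscr J}$. For a table $B$ with entries in $R$, $I(B)$ is the ideal generated by all generalized $2\times2$ minors of $B$ (determinants $\det\begin{pmatrix} b_{i} & b_{j_1,\dots,i_l,\dots,j_m}\\ b_{i_1,\dots,j_l,\dots,i_m} & b_{j}\end{pmatrix}$ interchanging one coordinate $l$),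 and $I_\Delta=\sum_{\mathscr J\in\Delta}I(A_{\mathscr J})$. $S_\Delta$ is the polynomial ring over $\mathbb K$ in variables $X_\sigma$ for tuples $\sigma$ with $\sigma_j\in\{1,\dots,a_j\}\cup\{\bullet\}$ and $\{j:\sigma_j\ne\bullet\}\in\Delta$. $\tau_\Delta:S_\Delta\to R$ sends $X_\sigma\mapsto x_{\sigma''}$ ($\bullet$ replaced by $+$). $\eta_\Delta:S_\Delta\to\mathbb K[y_{j,i}:1\le j\le n,\ i\in\{1,\dots,a_j\}\cup\{\bullet\}]$ (the $y_{j,\bullet}$ independent variables) sends $X_\sigma\mapsto\prod_j y_{j,\sigma_j}$, and $Q_\Delta=\ker\eta_\Delta$. *)

theory Defs
  imports "HOL-Library.Poly_Mapping"
begin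

type_synonym ('v, 'k) mpoly = "('v \<Rightarrow>\<^sub>0 nat) \<Rightarrow>\<^sub>0 'k"

definition Var :: "'v \<Rightarrow> ('v, 'k::comm_semiring_1) mpoly" where
  "Var v = Poly_Mapping.single (Poly_Mapping.single v 1) 1"

definition vars :: "('v, 'k::zero) mpoly \<Rightarrow> 'v set" where
  "vars p = (\<Union>m\<in>Poly_Mapping.keys p. Poly_Mapping.keys (m :: 'v \<Rightarrow>\<^sub>0 nat))"

definition mdeg :: "('v \<Rightarrow>\<^sub>0 nat) \<Rightarrow> nat" where
  "mdeg m = (\<Sum>v\<in>Poly_Mapping.keys m. Poly_Mapping.lookup m v)"

definition subst :: "('v \<Rightarrow> ('w, 'k::comm_semiring_1) mpoly) \<Rightarrow> ('v, 'k) mpoly \<Rightarrow> ('w, 'k) mpoly" where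
  "subst \<phi> p = (\<Sum>m\<in>Poly_Mapping.keys p. Poly_Mapping.single 0 (Poly_Mapping.lookup p m) * (\<Prod>v\<in>Poly_Mapping.keys m. \<phi> v ^ Poly_Mapping.lookup m v))"

definition ideal_gen :: "'a::comm_ring_1 set \<Rightarrow> 'a set" where
  "ideal_gen G = {p. \<exists>F r. finite F \<and> F \<subseteq> G \<and> p = (\<Sum>g\<in>F. r g * g)}"

definition ideal_pow :: "'a::comm_ring_1 set \<Rightarrow> nat \<Rightarrow> 'a set" where
  "ideal_pow I s = ideal_gen {prod_list xs | xs. length xs = s \<and> set xs \<subseteq> I}"

definition ideal_quot :: "'a::comm_ring_1 set \<Rightarrow> 'a set \<Rightarrow> 'a set" where
  "ideal_quot I J = {f. \<forall>g\<in>J. g * f \<in> I}"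

definition saturation :: "'a::comm_ring_1 set \<Rightarrow> 'a \<Rightarrow> 'a set" where
  "saturation I x = {f. \<exists>k. x ^ k * f \<in> I}"

definition simplicial_complex :: "nat \<Rightarrow> nat set set \<Rightarrow> bool" where
  "simplicial_complex n \<Delta> \<longleftrightarrow> \<Delta> \<noteq> {} \<and> \<Delta> \<subseteq> Pow {1..n} \<and> (\<forall>F\<in>\<Delta>. \<forall>G. G \<subseteq> F \<longrightarrow> G \<in> \<Delta>)"

definition facets :: "nat set set \<Rightarrow> nat set set" where
  "facets \<Delta> = {F\<in>\<Delta>. \<forall>G\<in>\<Delta>. F \<subseteq> G \<longrightarrow> G = F}"

(* Tuples \<sigma> are functions nat \<Rightarrow> nat; the value 0 encodes the symbol + (resp. \<bullet>).
  cells a J: tuples with \<sigma> j \<in> {1..a j} for j \<in> J and \<sigma> j = 0 (i.e. +) otherwise.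
  The variables of R are the x_c for c \<in> cells a {1..n}. *)
definition cells :: "(nat \<Rightarrow> nat) \<Rightarrow> nat set \<Rightarrow> (nat \<Rightarrow> nat) set" where
  "cells a J = {\<sigma>. \<forall>j. (j \<in> J \<longrightarrow> \<sigma> j \<in> {1..a j}) \<and> (j \<notin> J \<longrightarrow> \<sigma> j = 0)}"

definition xsum :: "nat \<Rightarrow> (nat \<Rightarrow> nat) \<Rightarrow> (nat \<Rightarrow> nat) \<Rightarrow> (nat \<Rightarrow> nat, 'k::comm_semiring_1) mpoly" where
  "xsum n a \<sigma> = (\<Sum>c\<in>{c\<in>cells a {1..n}. \<forall>j. \<sigma> j \<noteq> 0 \<longrightarrow> c j = \<sigma> j}. Var c)"

definition margin_ideal :: "nat \<Rightarrow> (nat \<Rightarrow> nat) \<Rightarrow> nat set \<Rightarrow> (nat \<Rightarrow> nat, 'k::comm_ring_1) mpoly set" where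
  "margin_ideal n a J = ideal_gen (xsum n a ` cells a J)"

definition minors_ideal :: "(nat \<Rightarrow> nat) \<Rightarrow> nat set \<Rightarrow> ((nat \<Rightarrow> nat) \<Rightarrow> 'r::comm_ring_1) \<Rightarrow> 'r set" where
  "minors_ideal a J B = ideal_gen {B i * B j - B (j(l := i l)) * B (i(l := j l)) | i j l.
       i \<in> cells a J \<and> j \<in> cells a J \<and> l \<in> J}"

(* I_\<Delta> = sum over J \<in> \<Delta> of I(A_J); the sum of ideals is the ideal generated by their union. *)
definition I_Delta :: "nat \<Rightarrow> (nat \<Rightarrow> nat) \<Rightarrow> nat set set \<Rightarrow> (nat \<Rightarrow> nat, 'k::comm_ring_1) mpoly set" where
  "I_Delta n a \<Delta> = ideal_gen (\<Union>J\<in>\<Delta>. minors_ideal a J (xsum n a))"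

(* Variables X_\<sigma> of S_\<Delta> (0 encodes \<bullet>). *)
definition S_vars :: "(nat \<Rightarrow> nat) \<Rightarrow> nat set set \<Rightarrow> (nat \<Rightarrow> nat) set" where
  "S_vars a \<Delta> = (\<Union>J\<in>\<Delta>. cells a J)"

definition tau :: "nat \<Rightarrow> (nat \<Rightarrow> nat) \<Rightarrow> (nat \<Rightarrow> nat, 'k::comm_ring_1) mpoly \<Rightarrow> (nat \<Rightarrow> nat, 'k) mpoly" where
  "tau n a = subst (xsum n a)"

(* eta: X_\<sigma> \<mapsto> \<Prod>_j y_{j,\<sigma>_j}; variable y_{j,i} is (j,i), with i = 0 encoding \<bullet>. *)
definition eta :: "nat \<Rightarrow> (nat \<Rightarrow> nat, 'k::comm_ring_1) mpoly \<Rightarrow> (nat \<times> nat, 'k) mpoly" where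
  "eta n = subst (\<lambda>\<sigma>. \<Prod>j\<in>{1..n}. Var (j, \<sigma> j))"

definition Q_Delta :: "nat \<Rightarrow> (nat \<Rightarrow> nat) \<Rightarrow> nat set set \<Rightarrow> (nat \<Rightarrow> nat, 'k::comm_ring_1) mpoly set" where
  "Q_Delta n a \<Delta> = {f. vars f \<subseteq> S_vars a \<Delta> \<and> eta n f = 0}"

definition binomial_of_degree :: "nat \<Rightarrow> ('v, 'k::comm_ring_1) mpoly \<Rightarrow> bool" where
  "binomial_of_degree s f \<longleftrightarrow> (\<exists>\<alpha> \<beta> c d. f = Poly_Mapping.single \<alpha> c + Poly_Mapping.single \<beta> d
      \<and> mdeg \<alpha> = s \<and> mdeg \<beta> = s)"

end

theory Submission
  imports Defs "HOL-Library.Multiset"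
begin


definition is_ideal :: "'a::comm_ring_1 set \<Rightarrow> bool" where
  "is_ideal I \<longleftrightarrow> 0 \<in> I \<and> (\<forall>x\<in>I. \<forall>y\<in>I. x + y \<in> I) \<and> (\<forall>x\<in>I. \<forall>r. r * x \<in> I)"

lemma ideal_0: "is_ideal I \<Longrightarrow> 0 \<in> I"
  unfolding is_ideal_def by blast
lemma ideal_add: "is_ideal I \<Longrightarrow> x \<in> I \<Longrightarrow> y \<in> I \<Longrightarrow> x + y \<in> I"
  unfolding is_ideal_def by blast
lemma ideal_mult_left: "is_ideal I \<Longrightarrow> x \<in> I \<Longrightarrow> r * x \<in> I"
  unfolding is_ideal_def by blast
lemma ideal_mult_right: "is_ideal I \<Longrightarrow> x \<in> I \<Longrightarrow> x * r \<in> I"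
  using ideal_mult_left[of I x r] by (simp add: mult.commute)
lemma ideal_uminus: "is_ideal I \<Longrightarrow> x \<in> I \<Longrightarrow> - x \<in> I"
  using ideal_mult_left[of I x "- 1"] by simp
lemma ideal_diff: "is_ideal I \<Longrightarrow> x \<in> I \<Longrightarrow> y \<in> I \<Longrightarrow> x - y \<in> I"
  using ideal_add[of I x "- y"] ideal_uminus[of I y] by simp

lemma ideal_sum:
  assumes "is_ideal I" "\<And>x. x \<in> A \<Longrightarrow> f x \<in> I"
  shows "sum f A \<in> I"
  using assms(2)
proof (induction A rule: infinite_finite_induct)
  case (infinite A) then show ?case using ideal_0[OF assms(1)] by simp
next
  case empty then show ?case using ideal_0[OF assms(1)] by simp
next
  case (insert x F) then show ?case using ideal_add[OF assms(1)] by simp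
qed

lemma ideal_gen_ideal: "is_ideal (ideal_gen G)"
  unfolding is_ideal_def
proof (intro conjI ballI allI)
  show "0 \<in> ideal_gen G" unfolding ideal_gen_def by (rule CollectI, rule exI[of _ "{}"]) auto
next
  fix x y assume "x \<in> ideal_gen G" "y \<in> ideal_gen G"
  then obtain F r F' r' where F: "finite F" "F \<subseteq> G" "x = (\<Sum>g\<in>F. r g * g)"
    and F': "finite F'" "F' \<subseteq> G" "y = (\<Sum>g\<in>F'. r' g * g)"
    unfolding ideal_gen_def by auto
  define r2 where "r2 g = (if g \<in> F then r g else 0) + (if g \<in> F' then r' g else 0)" for g
  have "(\<Sum>g\<in>F \<union> F'. (if g \<in> F then r g else 0) * g) = (\<Sum>g\<in>F. (if g \<in> F then r g else 0) * g)"
    by (rule sum.mono_neutral_right) (use F F' in auto)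
  then have xx: "x = (\<Sum>g\<in>F \<union> F'. (if g \<in> F then r g else 0) * g)" using F by simp
  have "(\<Sum>g\<in>F \<union> F'. (if g \<in> F' then r' g else 0) * g) = (\<Sum>g\<in>F'. (if g \<in> F' then r' g else 0) * g)"
    by (rule sum.mono_neutral_right) (use F F' in auto)
  then have yy: "y = (\<Sum>g\<in>F \<union> F'. (if g \<in> F' then r' g else 0) * g)" using F' by simp
  have "x + y = (\<Sum>g\<in>F \<union> F'. (if g \<in> F then r g else 0) * g + (if g \<in> F' then r' g else 0) * g)"
    unfolding xx yy by (rule sum.distrib[symmetric])
  also have "\<dots> = (\<Sum>g\<in>F \<union> F'. r2 g * g)"
    unfolding r2_def by (rule sum.cong[OF refl], rule distrib_right[symmetric])
  finally have "x + y = (\<Sum>g\<in>F \<union> F'. r2 g * g)" .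
  then show "x + y \<in> ideal_gen G" unfolding ideal_gen_def
    by (intro CollectI exI[of _ "F \<union> F'"] exI[of _ r2]) (use F F' in auto)
next
  fix x r assume "x \<in> ideal_gen G"
  then obtain F r' where F: "finite F" "F \<subseteq> G" "x = (\<Sum>g\<in>F. r' g * g)"
    unfolding ideal_gen_def by blast
  then have "r * x = (\<Sum>g\<in>F. (r * r' g) * g)" by (simp add: sum_distrib_left mult.assoc)
  then show "r * x \<in> ideal_gen G" unfolding ideal_gen_def
    by (intro CollectI exI[of _ F] exI[of _ "\<lambda>g. r * r' g"]) (use F in auto)
qed

lemma ideal_gen_base: "g \<in> G \<Longrightarrow> g \<in> ideal_gen G"
  unfolding ideal_gen_def by (rule CollectI, rule exI[of _ "{g}"], rule exI[of _ "\<lambda>_. 1"]) auto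

lemma ideal_gen_min:
  assumes "is_ideal I" "G \<subseteq> I"
  shows "ideal_gen G \<subseteq> I"
proof
  fix x assume "x \<in> ideal_gen G"
  then obtain F r where F: "finite F" "F \<subseteq> G" "x = (\<Sum>g\<in>F. r g * g)"
    unfolding ideal_gen_def by blast
  show "x \<in> I" unfolding F(3)
    by (rule ideal_sum[OF assms(1)]) (use F assms ideal_mult_left[OF assms(1)] in auto)
qed


definition monom :: "('v \<Rightarrow> ('w, 'k::comm_semiring_1) mpoly) \<Rightarrow> ('v \<Rightarrow>\<^sub>0 nat) \<Rightarrow> ('w, 'k) mpoly" where
  "monom \<phi> m = (\<Prod>v\<in>Poly_Mapping.keys m. \<phi> v ^ Poly_Mapping.lookup m v)"

lemma subst_eq:
  assumes "finite A" "Poly_Mapping.keys p \<subseteq> A"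
  shows "subst \<phi> p = (\<Sum>m\<in>A. Poly_Mapping.single 0 (Poly_Mapping.lookup p m) * monom \<phi> m)"
  unfolding subst_def monom_def
  by (rule sum.mono_neutral_left) (use assms in \<open>auto simp: in_keys_iff\<close>)

lemma subst_add: "subst \<phi> (p + q) = subst \<phi> p + subst \<phi> q"
proof -
  let ?A = "Poly_Mapping.keys p \<union> Poly_Mapping.keys q"
  have k: "Poly_Mapping.keys (p + q) \<subseteq> ?A" by (rule keys_add)
  show ?thesis
    by (simp add: subst_eq[OF _ k] subst_eq[of ?A p] subst_eq[of ?A q] lookup_add single_add
        distrib_right sum.distrib)
qed

lemma subst_single: "subst \<phi> (Poly_Mapping.single m c) = Poly_Mapping.single 0 c * monom \<phi> m"
  by (subst subst_eq[of "{m}"]) auto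

lemma subst_zero: "subst \<phi> 0 = 0"
  unfolding subst_def by simp

lemma single0_mult_single: "Poly_Mapping.single 0 c * Poly_Mapping.single m d = Poly_Mapping.single m (c * d)"
  by (simp add: mult_single)

lemma finite_cells: "finite J \<Longrightarrow> finite (cells a J)"
proof -
  assume "finite J"
  have "cells a J \<subseteq> {f. \<forall>x. (x \<in> J \<longrightarrow> f x \<in> (\<Union>j\<in>J. {1..a j})) \<and> (x \<notin> J \<longrightarrow> f x = 0)}"
    unfolding cells_def by auto
  moreover have "finite {f. \<forall>x. (x \<in> J \<longrightarrow> f x \<in> (\<Union>j\<in>J. {1..a j})) \<and> (x \<notin> J \<longrightarrow> f x = (0::nat))}"
    by (rule finite_set_of_finite_funs) (use \<open>finite J\<close> in auto)
  ultimately show ?thesis by (rule finite_subset)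
qed

definition xcells :: "nat \<Rightarrow> (nat \<Rightarrow> nat) \<Rightarrow> (nat \<Rightarrow> nat) \<Rightarrow> (nat \<Rightarrow> nat) set" where
  "xcells n a \<sigma> = {c\<in>cells a {1..n}. \<forall>j. \<sigma> j \<noteq> 0 \<longrightarrow> c j = \<sigma> j}"

lemma xsum_xcells: "xsum n a \<sigma> = (\<Sum>c\<in>xcells n a \<sigma>. Var c)"
  unfolding xsum_def xcells_def by simp

definition extc :: "(nat \<Rightarrow> nat) \<Rightarrow> nat set \<Rightarrow> (nat \<Rightarrow> nat) \<Rightarrow> (nat \<Rightarrow> nat) set" where
  "extc a K \<rho> = {i\<in>cells a K. \<forall>j. \<rho> j \<noteq> 0 \<longrightarrow> i j = \<rho> j}"

lemma sum_ext:
  assumes K: "K \<subseteq> {1..n}" and supp: "\<And>j. \<rho> j \<noteq> 0 \<Longrightarrow> j \<in> K"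
  shows "(\<Sum>i\<in>extc a K \<rho>. xsum n a i) = xsum n a \<rho>"
proof -
  define restr where "restr c = (\<lambda>j. if j \<in> K then c j else (0::nat))" for c :: "nat \<Rightarrow> nat"
  have fK: "finite K" using K finite_subset by blast
  have fS: "finite (xcells n a \<rho>)"
    by (rule finite_subset[OF _ finite_cells[of "{1..n}" a]]) (auto simp: xcells_def)
  have fT: "finite (extc a K \<rho>)"
    by (rule finite_subset[OF _ finite_cells[OF fK, of a]]) (auto simp: extc_def)
  have img: "restr ` xcells n a \<rho> \<subseteq> extc a K \<rho>"
  proof
    fix i assume "i \<in> restr ` xcells n a \<rho>"
    then obtain c where c: "c \<in> xcells n a \<rho>" "i = restr c" by blast
    show "i \<in> extc a K \<rho>"
      using c K supp unfolding xcells_def extc_def cells_def restr_def by (auto simp: subset_iff)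
  qed
  have fib: "{c. c \<in> xcells n a \<rho> \<and> restr c = i} = xcells n a i" if i: "i \<in> extc a K \<rho>" for i
  proof (intro set_eqI iffI)
    fix c assume c: "c \<in> {c. c \<in> xcells n a \<rho> \<and> restr c = i}"
    then show "c \<in> xcells n a i"
      using i unfolding xcells_def extc_def cells_def restr_def by auto
  next
    fix c assume c: "c \<in> xcells n a i"
    have ci: "c \<in> cells a {1..n}" "\<And>j. i j \<noteq> 0 \<Longrightarrow> c j = i j" using c unfolding xcells_def by auto
    have iK: "\<And>j. j \<in> K \<Longrightarrow> i j \<in> {1..a j}" "\<And>j. j \<notin> K \<Longrightarrow> i j = 0"
      "\<And>j. \<rho> j \<noteq> 0 \<Longrightarrow> i j = \<rho> j"
      using i unfolding extc_def cells_def by auto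
    have "restr c = i"
    proof
      fix j show "restr c j = i j"
      proof (cases "j \<in> K")
        case True then have "i j \<noteq> 0" using iK(1)[of j] by auto
        then show ?thesis using ci(2) True by (simp add: restr_def)
      next
        case False then show ?thesis using iK(2) by (simp add: restr_def)
      qed
    qed
    moreover have "c \<in> xcells n a \<rho>"
      unfolding xcells_def using ci iK(3) supp by auto
    ultimately show "c \<in> {c. c \<in> xcells n a \<rho> \<and> restr c = i}" by simp
  qed
  have "xsum n a \<rho> = (\<Sum>i\<in>extc a K \<rho>. \<Sum>c\<in>{c. c \<in> xcells n a \<rho> \<and> restr c = i}. Var c)"
    unfolding xsum_xcells by (rule sum.group[OF fS fT img, symmetric])
  also have "\<dots> = (\<Sum>i\<in>extc a K \<rho>. xsum n a i)"
    by (rule sum.cong[OF refl]) (simp add: fib xsum_xcells)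
  finally show ?thesis by (rule sym)
qed

lemma I_Delta_ideal: "is_ideal (I_Delta n a D)"
  unfolding I_Delta_def by (rule ideal_gen_ideal)

lemma minor_in_I:
  assumes "K \<in> D" "i \<in> cells a K" "j \<in> cells a K" "l \<in> K"
  shows "xsum n a i * xsum n a j - xsum n a (j(l := i l)) * xsum n a (i(l := j l)) \<in> I_Delta n a D"
proof -
  have "xsum n a i * xsum n a j - xsum n a (j(l := i l)) * xsum n a (i(l := j l)) \<in> minors_ideal a K (xsum n a)"
    unfolding minors_ideal_def by (rule ideal_gen_base) (use assms in blast)
  then show ?thesis unfolding I_Delta_def using assms(1) by (intro ideal_gen_base) blast
qed

lemma swap_xsum:
  assumes sc: "simplicial_complex n D" and K: "{j. r1 j \<noteq> 0} \<union> {j. r2 j \<noteq> 0} \<in> D"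
  shows "(xsum n a r1 * xsum n a r2 - xsum n a (r1(l := r2 l)) * xsum n a (r2(l := r1 l))
     :: (nat \<Rightarrow> nat, 'k::comm_ring_1) mpoly) \<in> I_Delta n a D"
proof (cases "l \<in> {j. r1 j \<noteq> 0} \<union> {j. r2 j \<noteq> 0}")
  case False
  then have "r1(l := r2 l) = r1" "r2(l := r1 l) = r2" by auto
  then show ?thesis using ideal_0[OF I_Delta_ideal] by simp
next
  case True
  define K where "K = {j. r1 j \<noteq> 0} \<union> {j. r2 j \<noteq> 0}"
  have lK: "l \<in> K" using True K_def by simp
  have KD: "K \<in> D" using K K_def by simp
  have Kn: "K \<subseteq> {1..n}" using sc KD unfolding simplicial_complex_def by blast
  define r1' where "r1' = r1(l := r2 l)"
  define r2' where "r2' = r2(l := r1 l)"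
  define sw where "sw = (\<lambda>(i::nat\<Rightarrow>nat, j::nat\<Rightarrow>nat). (j(l := i l), i(l := j l)))"
  let ?B = "xsum n a :: (nat \<Rightarrow> nat) \<Rightarrow> (nat \<Rightarrow> nat, 'k) mpoly"
  have e1: "?B r1 = (\<Sum>i\<in>extc a K r1. ?B i)" by (rule sum_ext[OF Kn, symmetric]) (auto simp: K_def)
  have e2: "?B r2 = (\<Sum>i\<in>extc a K r2. ?B i)" by (rule sum_ext[OF Kn, symmetric]) (auto simp: K_def)
  have e1': "?B r1' = (\<Sum>i\<in>extc a K r1'. ?B i)" by (rule sum_ext[OF Kn, symmetric]) (use lK in \<open>auto simp: K_def r1'_def split: if_splits\<close>)
  have e2': "?B r2' = (\<Sum>i\<in>extc a K r2'. ?B i)" by (rule sum_ext[OF Kn, symmetric]) (use lK in \<open>auto simp: K_def r2'_def split: if_splits\<close>)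
  have p1: "?B r1 * ?B r2 = (\<Sum>(i,j)\<in>extc a K r1 \<times> extc a K r2. ?B i * ?B j)"
    unfolding e1 e2 sum_product sum.cartesian_product by simp
  have p2: "?B r1' * ?B r2' = (\<Sum>(p,q)\<in>extc a K r2' \<times> extc a K r1'. ?B p * ?B q)"
  proof -
    have "?B r2' * ?B r1' = (\<Sum>(p,q)\<in>extc a K r2' \<times> extc a K r1'. ?B p * ?B q)"
      unfolding e1' e2' sum_product sum.cartesian_product by simp
    then show ?thesis by (simp add: mult.commute)
  qed
  have p3: "(\<Sum>(p,q)\<in>extc a K r2' \<times> extc a K r1'. ?B p * ?B q)
      = (\<Sum>(i,j)\<in>extc a K r1 \<times> extc a K r2. ?B (j(l := i l)) * ?B (i(l := j l)))"
  proof (rule sum.reindex_bij_witness[of _ sw sw])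
    fix x assume x: "x \<in> extc a K r2' \<times> extc a K r1'"
    show "sw (sw x) = x" by (auto simp: sw_def split: prod.splits)
  next
    fix x assume x: "x \<in> extc a K r2' \<times> extc a K r1'"
    show "sw x \<in> extc a K r1 \<times> extc a K r2"
      using x lK unfolding sw_def extc_def cells_def r1'_def r2'_def by (auto split: prod.splits if_splits)
  next
    fix y assume y: "y \<in> extc a K r1 \<times> extc a K r2"
    show "sw (sw y) = y" by (auto simp: sw_def split: prod.splits)
  next
    fix y assume y: "y \<in> extc a K r1 \<times> extc a K r2"
    show "sw y \<in> extc a K r2' \<times> extc a K r1'"
      using y lK unfolding sw_def extc_def cells_def r1'_def r2'_def by (auto split: prod.splits)
  next
    fix x assume x: "x \<in> extc a K r2' \<times> extc a K r1'"
    show "(case sw x of (i, j) \<Rightarrow> ?B (j(l := i l)) * ?B (i(l := j l))) = (case x of (p, q) \<Rightarrow> ?B p * ?B q)"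
      by (auto simp: sw_def split: prod.splits)
  qed
  define F where "F = (\<lambda>(i,j). ?B i * ?B j)"
  define G where "G = (\<lambda>(i,j). ?B (j(l := i l)) * ?B (i(l := j l)))"
  have "?B r1 * ?B r2 - ?B r1' * ?B r2' = sum F (extc a K r1 \<times> extc a K r2) - sum G (extc a K r1 \<times> extc a K r2)"
    unfolding p1 p2 p3 F_def G_def ..
  also have "\<dots> = (\<Sum>x\<in>extc a K r1 \<times> extc a K r2. F x - G x)"
    by (rule sum_subtractf[symmetric])
  also have "\<dots> \<in> I_Delta n a D"
  proof (rule ideal_sum[OF I_Delta_ideal])
    fix x assume x: "x \<in> extc a K r1 \<times> extc a K r2"
    then obtain i j where ij: "x = (i, j)" "i \<in> cells a K" "j \<in> cells a K" unfolding extc_def by auto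
    show "F x - G x \<in> I_Delta n a D"
      using minor_in_I[OF KD ij(2,3) lK] ij(1) by (simp add: F_def G_def)
  qed
  finally show ?thesis unfolding r1'_def r2'_def .
qed


definition supp :: "(nat \<Rightarrow> nat) \<Rightarrow> nat set" where "supp r = {j. r j \<noteq> 0}"

definition col :: "(nat \<Rightarrow> nat) list \<Rightarrow> nat \<Rightarrow> nat list" where "col C j = map (\<lambda>r. r j) C"

definition exch :: "(nat \<Rightarrow> nat) list \<Rightarrow> nat \<Rightarrow> nat \<Rightarrow> nat \<Rightarrow> (nat \<Rightarrow> nat) list" where
  "exch C i k j = C[i := (C!i)(j := (C!k) j), k := (C!k)(j := (C!i) j)]"

lemma length_exch [simp]: "length (exch C i k j) = length C"
  by (simp add: exch_def)

lemma nth_exch: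
  assumes "i < length C" "k < length C" "i \<noteq> k" "m < length C"
  shows "exch C i k j ! m = (if m = i then (C!i)(j := (C!k) j) else if m = k then (C!k)(j := (C!i) j) else C!m)"
  using assms by (auto simp: exch_def nth_list_update)

lemma col_exch:
  assumes "i < length C" "k < length C" "i \<noteq> k"
  shows "mset (col (exch C i k j) j') = mset (col C j')"
proof -
  have e: "col (exch C i k j) j' = (col C j')[i := ((C!i)(j := (C!k) j)) j', k := ((C!k)(j := (C!i) j)) j']"
    by (simp add: col_def exch_def map_update)
  show ?thesis
  proof (cases "j' = j")
    case True
    then have "col (exch C i k j) j' = (col C j')[i := col C j' ! k, k := col C j' ! i]"
      using e assms by (simp add: col_def)
    also have "\<dots> = (col C j')[k := col C j' ! i, i := col C j' ! k]"
      using assms by (simp add: list_update_swap)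
    finally show ?thesis using mset_swap[of i "col C j'" k] assms by (simp add: col_def)
  next
    case False
    then have "col (exch C i k j) j' = (col C j')[i := col C j' ! i, k := col C j' ! k]"
      using e assms by (simp add: col_def)
    then show ?thesis by simp
  qed
qed

lemma add_mset_diff_single: "b \<in># X \<Longrightarrow> add_mset a X - {#b#} = add_mset a (X - {#b#})"
proof -
  assume "b \<in># X"
  then obtain X' where "X = add_mset b X'" by (blast dest: multi_member_split)
  then show ?thesis by simp
qed

lemma mset_exch:
  assumes "i < length C" "k < length C" "i \<noteq> k"
  shows "mset C = add_mset (C!i) (add_mset (C!k) (mset C - {#C!i#} - {#C!k#}))"
    "mset (exch C i k j) = add_mset ((C!i)(j := (C!k) j)) (add_mset ((C!k)(j := (C!i) j)) (mset C - {#C!i#} - {#C!k#}))"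
proof -
  define y where "y = (C!k)(0 := Suc ((C!k) 0))"
  have yne: "y \<noteq> C!k" unfolding y_def by (metis fun_upd_same n_not_Suc_n)
  have "C!k \<in> set (C[i := y])"
    using assms by (metis length_list_update nth_list_update_neq nth_mem)
  then have "C!k \<in># add_mset y (mset C - {#C!i#})"
    using assms by (simp add: mset_update[symmetric])
  then have ki: "C!k \<in># mset C - {#C!i#}" using yne by simp
  have ii: "C!i \<in># mset C" using assms by simp
  have m1: "mset C = add_mset (C!i) (mset C - {#C!i#})" using ii by simp
  have m2: "mset C - {#C!i#} = add_mset (C!k) (mset C - {#C!i#} - {#C!k#})" by (rule insert_DiffM[OF ki, symmetric])
  show "mset C = add_mset (C!i) (add_mset (C!k) (mset C - {#C!i#} - {#C!k#}))"
    using m1 m2 by metis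
  have u1: "mset (C[i := (C!i)(j := (C!k) j)]) = add_mset ((C!i)(j := (C!k) j)) (mset C - {#C!i#})"
    using assms by (simp add: mset_update)
  have "mset (exch C i k j) = add_mset ((C!k)(j := (C!i) j)) (mset (C[i := (C!i)(j := (C!k) j)]) - {#C!k#})"
    using assms unfolding exch_def by (subst mset_update) (simp_all add: nth_list_update)
  also have "\<dots> = add_mset ((C!k)(j := (C!i) j)) (add_mset ((C!i)(j := (C!k) j)) (mset C - {#C!i#} - {#C!k#}))"
    unfolding u1 using ki by (simp add: add_mset_diff_single)
  finally show "mset (exch C i k j) = add_mset ((C!i)(j := (C!k) j)) (add_mset ((C!k)(j := (C!i) j)) (mset C - {#C!i#} - {#C!k#}))"
    by (simp add: add_mset_commute)
qed

locale comb =
  fixes D :: "nat set set" and Lc :: "nat set" and U :: "nat set"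
    and I :: "'r::comm_ring_1 set" and x :: "(nat \<Rightarrow> nat) \<Rightarrow> 'r"
  assumes idl: "is_ideal I"
    and down: "\<And>J A. J \<in> D \<Longrightarrow> A \<subseteq> J \<Longrightarrow> A \<in> D"
    and Lc_ax: "\<And>J. J \<in> D \<Longrightarrow> J \<union> Lc \<in> D"
    and Lc_D: "Lc \<in> D"
    and finU: "finite U" and DU: "\<And>J. J \<in> D \<Longrightarrow> J \<subseteq> U"
    and swap_ax: "\<And>r1 r2 l. supp r1 \<union> supp r2 \<in> D \<Longrightarrow> x r1 * x r2 - x (r1(l := r2 l)) * x (r2(l := r1 l)) \<in> I"
begin

definition P :: "(nat \<Rightarrow> nat) multiset \<Rightarrow> 'r" where "P M = prod_mset (image_mset x M)"

definition eqv :: "(nat \<Rightarrow> nat) multiset \<Rightarrow> (nat \<Rightarrow> nat) multiset \<Rightarrow> bool" where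
  "eqv M N \<longleftrightarrow> P M - P N \<in> I"

lemma eqv_refl: "eqv M M"
  unfolding eqv_def using ideal_0[OF idl] by simp

lemma eqv_sym: "eqv M N \<Longrightarrow> eqv N M"
  unfolding eqv_def using ideal_uminus[OF idl] by (metis minus_diff_eq)

lemma eqv_trans: "eqv M N \<Longrightarrow> eqv N K \<Longrightarrow> eqv M K"
  unfolding eqv_def using ideal_add[OF idl] by (metis diff_add_cancel add_diff_eq)

lemma eqv_add: "eqv M N \<Longrightarrow> eqv (M + K) (N + K)"
proof -
  assume "eqv M N"
  then have "(P M - P N) * P K \<in> I" unfolding eqv_def by (rule ideal_mult_right[OF idl])
  then show ?thesis unfolding eqv_def P_def by (simp add: algebra_simps)
qed

lemma sub_ok: "J \<in> D \<Longrightarrow> A \<subseteq> J \<union> Lc \<Longrightarrow> A \<in> D"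
  using down Lc_ax by blast

lemma swapM:
  assumes "supp r1 \<union> supp r2 \<in> D"
  shows "eqv (add_mset r1 (add_mset r2 M)) (add_mset (r1(l := r2 l)) (add_mset (r2(l := r1 l)) M))"
proof -
  have "eqv {#r1, r2#} {#r1(l := r2 l), r2(l := r1 l)#}"
    unfolding eqv_def P_def using swap_ax[OF assms, of l] by simp
  from eqv_add[OF this, of M] show ?thesis by simp
qed

lemma supp_upd: "supp (r(l := v)) \<subseteq> supp r \<union> {l}"
  by (auto simp: supp_def)

lemma cycle3:
  assumes W: "supp W \<subseteq> Lc" and r1: "supp r1 \<in> D" and r2: "supp r2 \<in> D"
    and r1': "supp (r1(l := r2 l)) \<in> D" and r2': "supp (r2(l := r1 l)) \<in> D"
  shows "eqv (add_mset W (add_mset r1 (add_mset r2 M))) (add_mset W (add_mset (r1(l := r2 l)) (add_mset (r2(l := r1 l)) M)))"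
proof -
  define a1 where "a1 = r1(l := W l)"
  define W1 where "W1 = W(l := r1 l)"
  define W2 where "W2 = W(l := r2 l)"
  have s1: "eqv (add_mset r1 (add_mset W (add_mset r2 M))) (add_mset a1 (add_mset W1 (add_mset r2 M)))"
    unfolding a1_def W1_def
    by (rule swapM, rule sub_ok[OF r1]) (use W in auto)
  have c2: "supp W1 \<union> supp r2 \<in> D"
  proof (cases "r1 l = 0")
    case True
    then have "supp W1 \<subseteq> Lc" using W by (auto simp: W1_def supp_def)
    then show ?thesis by (intro sub_ok[OF r2]) auto
  next
    case False
    then have "supp W1 \<union> supp r2 \<subseteq> supp (r2(l := r1 l)) \<union> Lc" using W by (auto simp: W1_def supp_def)
    then show ?thesis by (intro sub_ok[OF r2']) auto
  qed
  have s2: "eqv (add_mset W1 (add_mset r2 (add_mset a1 M))) (add_mset W2 (add_mset (r2(l := r1 l)) (add_mset a1 M)))"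
    using swapM[OF c2, where l=l and M="add_mset a1 M"] by (simp add: W1_def W2_def)
  have c3: "supp W2 \<union> supp a1 \<in> D"
  proof (cases "r2 l = 0")
    case True
    then have "supp W2 \<union> supp a1 \<subseteq> supp r1 \<union> Lc" using W by (auto simp: W2_def a1_def supp_def)
    then show ?thesis by (intro sub_ok[OF r1]) auto
  next
    case False
    then have "supp W2 \<union> supp a1 \<subseteq> supp (r1(l := r2 l)) \<union> Lc" using W by (auto simp: W2_def a1_def supp_def)
    then show ?thesis by (intro sub_ok[OF r1']) auto
  qed
  have s3: "eqv (add_mset W2 (add_mset a1 (add_mset (r2(l := r1 l)) M))) (add_mset W (add_mset (r1(l := r2 l)) (add_mset (r2(l := r1 l)) M)))"
    using swapM[OF c3, where l=l and M="add_mset (r2(l := r1 l)) M"] by (simp add: W2_def a1_def)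
  have e1: "add_mset W (add_mset r1 (add_mset r2 M)) = add_mset r1 (add_mset W (add_mset r2 M))"
    by (simp add: add_mset_commute)
  have e2: "add_mset a1 (add_mset W1 (add_mset r2 M)) = add_mset W1 (add_mset r2 (add_mset a1 M))"
    by (simp add: add_mset_commute)
  have e3: "add_mset W2 (add_mset (r2(l := r1 l)) (add_mset a1 M)) = add_mset W2 (add_mset a1 (add_mset (r2(l := r1 l)) M))"
    by (simp add: add_mset_commute)
  show ?thesis unfolding e1
    by (rule eqv_trans[OF s1], unfold e2, rule eqv_trans[OF s2], unfold e3, rule s3)
qed

end


lemma mset_nth_split:
  assumes "distinct is" "set is \<subseteq> {..<length C}"
  shows "mset C = mset (map ((!) C) is) + mset (map ((!) C) (filter (\<lambda>m. m \<notin> set is) [0..<length C]))"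
proof -
  have "mset [0..<length C] = mset (filter (\<lambda>m. m \<in> set is) [0..<length C]) + mset (filter (\<lambda>m. m \<notin> set is) [0..<length C])"
    by (metis mset_filter multiset_partition)
  moreover have "mset (filter (\<lambda>m. m \<in> set is) [0..<length C]) = mset is"
    using assms by (intro iffD1[OF set_eq_iff_mset_eq_distinct]) auto
  ultimately have "mset [0..<length C] = mset is + mset (filter (\<lambda>m. m \<notin> set is) [0..<length C])" by simp
  then have "image_mset ((!) C) (mset [0..<length C]) = image_mset ((!) C) (mset is) + image_mset ((!) C) (mset (filter (\<lambda>m. m \<notin> set is) [0..<length C]))"
    by simp
  moreover have "mset C = image_mset ((!) C) (mset [0..<length C])"
    by (metis map_nth mset_map)
  ultimately show ?thesis by simp
qed

context comb begin

lemma GE: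
  assumes ik: "i < length C" "k < length C" "i \<noteq> k"
    and cond: "supp (C!i) \<union> supp (C!k) \<in> D \<or> (\<exists>w<length C. w \<noteq> i \<and> w \<noteq> k \<and> supp (C!w) \<subseteq> Lc \<and> supp (C!i) \<in> D
        \<and> supp (C!k) \<in> D \<and> supp ((C!i)(j := (C!k) j)) \<in> D \<and> supp ((C!k)(j := (C!i) j)) \<in> D)"
  shows "eqv (mset C) (mset (exch C i k j))"
proof (cases "supp (C!i) \<union> supp (C!k) \<in> D")
  case True
  then have c: "supp (C!i) \<union> supp (C!k) \<in> D" .
  define R where "R = mset C - {#C!i#} - {#C!k#}"
  have e1: "mset C = add_mset (C!i) (add_mset (C!k) R)" unfolding R_def by (rule mset_exch(1)[OF ik])
  have e2: "mset (exch C i k j) = add_mset ((C!i)(j := (C!k) j)) (add_mset ((C!k)(j := (C!i) j)) R)"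
    unfolding R_def by (rule mset_exch(2)[OF ik])
  show ?thesis unfolding e1 e2 by (rule swapM[OF c])
next
  case False
  with cond have "\<exists>w<length C. w \<noteq> i \<and> w \<noteq> k \<and> supp (C!w) \<subseteq> Lc \<and> supp (C!i) \<in> D
        \<and> supp (C!k) \<in> D \<and> supp ((C!i)(j := (C!k) j)) \<in> D \<and> supp ((C!k)(j := (C!i) j)) \<in> D" by blast
  then obtain w where w: "w < length C" "w \<noteq> i" "w \<noteq> k" "supp (C!w) \<subseteq> Lc" "supp (C!i) \<in> D"
    "supp (C!k) \<in> D" "supp ((C!i)(j := (C!k) j)) \<in> D" "supp ((C!k)(j := (C!i) j)) \<in> D" by blast
  define Rest where "Rest = mset (map ((!) C) (filter (\<lambda>m. m \<notin> set [w, i, k]) [0..<length C]))"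
  have s1: "mset C = add_mset (C!w) (add_mset (C!i) (add_mset (C!k) Rest))"
    using mset_nth_split[of "[w,i,k]" C] ik w by (simp add: Rest_def)
  have s2: "mset (exch C i k j) = add_mset (C!w) (add_mset ((C!i)(j := (C!k) j)) (add_mset ((C!k)(j := (C!i) j)) Rest))"
  proof -
    have mapeq: "map ((!) (exch C i k j)) (filter (\<lambda>m. m \<notin> set [w, i, k]) [0..<length C])
        = map ((!) C) (filter (\<lambda>m. m \<notin> set [w, i, k]) [0..<length C])"
      using ik by (intro map_cong refl) (simp add: nth_exch)
    have "mset (exch C i k j) = mset (map ((!) (exch C i k j)) [w,i,k]) +
       mset (map ((!) (exch C i k j)) (filter (\<lambda>m. m \<notin> set [w, i, k]) [0..<length (exch C i k j)]))"
      by (rule mset_nth_split) (use ik w in auto)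
    then have "mset (exch C i k j) = mset (map ((!) (exch C i k j)) [w,i,k]) +
       mset (map ((!) (exch C i k j)) (filter (\<lambda>m. m \<notin> set [w, i, k]) [0..<length C]))"
      by (simp only: length_exch)
    also have "\<dots> = mset (map ((!) (exch C i k j)) [w,i,k]) + Rest"
      unfolding Rest_def mapeq ..
    finally show ?thesis using ik w by (simp add: nth_exch)
  qed
  show ?thesis unfolding s1 s2 by (rule cycle3) (use w in auto)
qed

end


lemma cnt_eq:
  assumes "mset (col C j) = mset (col T j)"
  shows "card {m. m < length C \<and> (C!m) j = v} = card {m. m < length T \<and> (T!m) j = v}"
proof -
  have "length (filter ((=) v) (col C j)) = length (filter ((=) v) (col T j))"
    using assms by (metis count_mset count_list_eq_length_filter)
  then have "card {m. m < length (col C j) \<and> v = col C j ! m} = card {m. m < length (col T j) \<and> v = col T j ! m}"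
    by (simp only: length_filter_conv_card)
  moreover have "{m. m < length (col C j) \<and> v = col C j ! m} = {m. m < length C \<and> (C!m) j = v}"
    by (auto simp: col_def)
  moreover have "{m. m < length (col T j) \<and> v = col T j ! m} = {m. m < length T \<and> (T!m) j = v}"
    by (auto simp: col_def)
  ultimately show ?thesis by simp
qed

context comb begin

lemma finLc: "finite Lc" using finU DU[OF Lc_D] finite_subset by blast

lemma phase2:
  fixes C T :: "(nat \<Rightarrow> nat) list"
  assumes len: "length C = length T"
    and off: "\<forall>m<length C. \<forall>j. j \<notin> Lc \<longrightarrow> (C!m) j = (T!m) j"
    and cols: "\<forall>j. mset (col C j) = mset (col T j)"
    and Tok: "\<forall>m<length T. supp (T!m) \<in> D"
    and sm: "\<exists>w<length T. supp (T!w) \<subseteq> Lc"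
  shows "eqv (mset C) (mset T)"
  using len off cols
proof (induction "card {(m,j). m < length T \<and> j \<in> Lc \<and> (C!m) j \<noteq> (T!m) j}" arbitrary: C rule: less_induct)
  case less
  define mis where "mis C = {(m,j). m < length T \<and> j \<in> Lc \<and> (C!m) j \<noteq> (T!m) j}" for C :: "(nat \<Rightarrow> nat) list"
  have finmis: "finite (mis C')" for C' unfolding mis_def
    by (rule finite_subset[of _ "{..<length T} \<times> Lc"]) (use finLc in auto)
  have suppC: "supp (C!m) \<subseteq> supp (T!m) \<union> Lc" if "m < length T" for m
    using less.prems that by (auto simp: supp_def)
  have CokD: "supp (C!m) \<in> D" if "m < length T" for m
    using sub_ok[OF _ suppC[OF that]] Tok that by blast
  show ?case
  proof (cases "mis C = {}")
    case True
    have "C = T"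
    proof (rule nth_equalityI)
      show "length C = length T" by (rule less.prems(1))
      fix m assume m: "m < length C"
      show "C!m = T!m"
      proof
        fix j show "(C!m) j = (T!m) j"
          using True m less.prems(1,2) unfolding mis_def by (cases "j \<in> Lc") auto
      qed
    qed
    then show ?thesis using eqv_refl by simp
  next
    case False
    then obtain i j where ij: "i < length T" "j \<in> Lc" "(C!i) j \<noteq> (T!i) j" unfolding mis_def by auto
    define v where "v = (T!i) j"
    define Pc where "Pc = {m. m < length C \<and> (C!m) j = v}"
    define Pt where "Pt = {m. m < length T \<and> (T!m) j = v}"
    have cPc: "card Pc = card Pt" unfolding Pc_def Pt_def by (rule cnt_eq) (use less.prems in auto)
    have "\<not> Pc \<subseteq> Pt"
    proof
      assume "Pc \<subseteq> Pt"
      moreover have "i \<in> Pt - Pc" unfolding Pc_def Pt_def v_def using ij by auto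
      ultimately have "Pc \<subset> Pt" by blast
      moreover have "finite Pt" unfolding Pt_def by auto
      ultimately have "card Pc < card Pt" by (rule psubset_card_mono[rotated])
      then show False using cPc by simp
    qed
    then obtain k where k: "k < length T" "(C!k) j = v" "(T!k) j \<noteq> v"
      unfolding Pc_def Pt_def using less.prems(1) by auto
    have ki: "k \<noteq> i" using k ij unfolding v_def by auto
    have iC: "i < length C" "k < length C" using ij k less.prems(1) by auto
    define C' where "C' = exch C i k j"
    obtain w where w: "w < length T" "supp (T!w) \<subseteq> Lc" using sm by blast
    have wC: "supp (C!w) \<subseteq> Lc" using suppC[OF w(1)] w(2) by auto
    have upd_ok: "supp ((C!m)(j := z)) \<in> D" if "m < length T" for m z
    proof -
      have "supp ((C!m)(j := z)) \<subseteq> supp (T!m) \<union> Lc" using suppC[OF that] supp_upd[of "C!m" j z] ij(2) by auto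
      then show ?thesis using sub_ok Tok that by blast
    qed
    have e: "eqv (mset C) (mset C')"
      unfolding C'_def
    proof (rule GE[OF iC ki[symmetric]])
      show "supp (C!i) \<union> supp (C!k) \<in> D \<or> (\<exists>w<length C. w \<noteq> i \<and> w \<noteq> k \<and> supp (C!w) \<subseteq> Lc \<and> supp (C!i) \<in> D
        \<and> supp (C!k) \<in> D \<and> supp ((C!i)(j := (C!k) j)) \<in> D \<and> supp ((C!k)(j := (C!i) j)) \<in> D)"
      proof (cases "w = i \<or> w = k")
        case True
        then have "supp (C!i) \<union> supp (C!k) \<subseteq> supp (T!i) \<union> Lc \<or> supp (C!i) \<union> supp (C!k) \<subseteq> supp (T!k) \<union> Lc"
          using wC suppC[OF ij(1)] suppC[OF k(1)] by auto
        then show ?thesis using sub_ok Tok ij(1) k(1) by blast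
      next
        case False
        then show ?thesis using w(1) wC CokD ij(1) k(1) upd_ok less.prems(1) by auto
      qed
    qed
    have len': "length C' = length T" using less.prems(1) by (simp add: C'_def)
    have off': "\<forall>m<length C'. \<forall>j'. j' \<notin> Lc \<longrightarrow> (C'!m) j' = (T!m) j'"
      using less.prems(1,2) iC ki ij(2) by (auto simp: C'_def nth_exch)
    have cols': "\<forall>j'. mset (col C' j') = mset (col T j')"
      using less.prems(3) col_exch[OF iC ki[symmetric]] by (simp add: C'_def)
    have sub: "mis C' \<subseteq> mis C - {(i,j)}"
    proof
      fix p assume p: "p \<in> mis C'"
      obtain m j' where p': "p = (m, j')" by (cases p)
      have m: "m < length T" "j' \<in> Lc" "(C'!m) j' \<noteq> (T!m) j'" using p p' unfolding mis_def by auto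
      show "p \<in> mis C - {(i,j)}"
      proof (cases "m = i \<or> m = k")
        case True
        then show ?thesis using m p' iC ki k(2,3) ij unfolding mis_def C'_def v_def
          by (auto simp: nth_exch split: if_splits)
      next
        case False
        have "m < length C" using m(1) less.prems(1) by simp
        then show ?thesis using False m p' iC ki unfolding mis_def C'_def by (auto simp: nth_exch)
      qed
    qed
    moreover have "(i,j) \<in> mis C" unfolding mis_def using ij by auto
    ultimately have "mis C' \<subset> mis C" by blast
    then have "card (mis C') < card (mis C)" using finmis by (simp add: psubset_card_mono)
    then have "eqv (mset C') (mset T)"
      using less.hyps[OF _ len' off' cols'] unfolding mis_def by blast
    then show ?thesis using eqv_trans[OF e] by blast
  qed
qed

end


context comb begin

lemma supp_sub_U: "supp r \<in> D \<Longrightarrow> r j \<noteq> 0 \<Longrightarrow> j \<in> U"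
  using DU by (auto simp: supp_def)

lemma phase1:
  fixes C T :: "(nat \<Rightarrow> nat) list" and s :: nat
  assumes len: "length C = length T"
    and sl: "s \<le> length T"
    and agr: "\<forall>m<s. \<forall>j. j \<notin> Lc \<longrightarrow> (C!m) j \<noteq> 0 \<longrightarrow> (C!m) j = (T!m) j"
    and Tz: "\<forall>m. s \<le> m \<longrightarrow> m < length T \<longrightarrow> (\<forall>j. j \<notin> Lc \<longrightarrow> (T!m) j = 0)"
    and Cok: "\<forall>m<length C. supp (C!m) \<in> D"
    and Tok: "\<forall>m<length T. supp (T!m) \<in> D"
    and cols: "\<forall>j. mset (col C j) = mset (col T j)"
    and ord: "(\<exists>m<s-1. \<exists>j. j \<notin> Lc \<and> (C!m) j \<noteq> (T!m) j) \<longrightarrow> (\<forall>j. j \<notin> Lc \<longrightarrow> (C!(s-1)) j = 0)"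
  shows "\<exists>C'. eqv (mset C) (mset C') \<and> length C' = length T \<and> (\<forall>m<length T. \<forall>j. j \<notin> Lc \<longrightarrow> (C'!m) j = (T!m) j)
     \<and> (\<forall>j. mset (col C' j) = mset (col T j))"
  using len agr Cok cols ord
proof (induction "card {(m,j). m < s \<and> j \<in> U \<and> j \<notin> Lc \<and> (C!m) j \<noteq> (T!m) j}" arbitrary: C rule: less_induct)
  case less
  define mis where "mis C = {(m,j). m < s \<and> j \<in> U \<and> j \<notin> Lc \<and> (C!m) j \<noteq> (T!m) j}" for C :: "(nat \<Rightarrow> nat) list"
  have finmis: "finite (mis C')" for C' unfolding mis_def
    by (rule finite_subset[of _ "{..<s} \<times> U"]) (use finU in auto)
  note lenC = less.prems(1) and agrC = less.prems(2) and CokC = less.prems(3) and colsC = less.prems(4)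
    and ordC = less.prems(5)
  have cnt: "card {m. m < length T \<and> (C!m) j = v} = card {m. m < length T \<and> (T!m) j = v}" for j v
    using cnt_eq[of C j T v] colsC lenC by simp
  have Tsub: "{m. m < length T \<and> (T!m) j = v} = {m. m < s \<and> (T!m) j = v}" if "v \<noteq> 0" "j \<notin> Lc" for j v
  proof (intro set_eqI iffI)
    fix m assume "m \<in> {m. m < length T \<and> (T!m) j = v}"
    then have m: "m < length T" "(T!m) j = v" by auto
    have "m < s"
    proof (rule ccontr)
      assume "\<not> m < s"
      then have "(T!m) j = 0" using Tz m(1) that(2) by (simp add: not_less)
      then show False using m(2) that(1) by simp
    qed
    then show "m \<in> {m. m < s \<and> (T!m) j = v}" using m by simp
  next
    fix m assume "m \<in> {m. m < s \<and> (T!m) j = v}"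
    then show "m \<in> {m. m < length T \<and> (T!m) j = v}" using sl by auto
  qed
  show ?case
  proof (cases "mis C = {}")
    case True
    have agree_s: "(C!m) j = (T!m) j" if "m < s" "j \<notin> Lc" for m j
    proof (cases "j \<in> U")
      case True then show ?thesis using `mis C = {}` that unfolding mis_def by auto
    next
      case False
      have "m < length T" using that sl by simp
      then have "(C!m) j = 0" "(T!m) j = 0" using supp_sub_U[of "C!m" j] supp_sub_U[of "T!m" j] CokC Tok lenC False
        by auto
      then show ?thesis by simp
    qed
    have agree_big: "(C!m) j = 0" if "s \<le> m" "m < length T" "j \<notin> Lc" for m j
    proof (rule ccontr)
      assume ne: "(C!m) j \<noteq> 0"
      define v where "v = (C!m) j"
      have "{m'. m' < s \<and> (T!m') j = v} = {m'. m' < s \<and> (C!m') j = v}"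
      proof (rule Collect_cong)
        fix m' show "(m' < s \<and> (T!m') j = v) = (m' < s \<and> (C!m') j = v)"
          using agree_s[of m' j] that(3) by auto
      qed
      moreover have "{m'. m' < s \<and> (C!m') j = v} \<subseteq> {m'. m' < length T \<and> (C!m') j = v}"
        using sl by auto
      moreover have "m \<in> {m'. m' < length T \<and> (C!m') j = v}" "m \<notin> {m'. m' < s \<and> (C!m') j = v}"
        using that v_def by auto
      ultimately have "{m'. m' < s \<and> (C!m') j = v} \<subset> {m'. m' < length T \<and> (C!m') j = v}"
        by blast
      then have "card {m'. m' < s \<and> (C!m') j = v} < card {m'. m' < length T \<and> (C!m') j = v}"
        by (simp add: psubset_card_mono)
      moreover have "card {m'. m' < length T \<and> (T!m') j = v} = card {m'. m' < s \<and> (C!m') j = v}"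
        using Tsub[of v j] ne v_def that(3) `{m'. m' < s \<and> (T!m') j = v} = {m'. m' < s \<and> (C!m') j = v}` by simp
      ultimately have "card {m'. m' < length T \<and> (T!m') j = v} < card {m'. m' < length T \<and> (C!m') j = v}"
        by simp
      then show False using cnt[of j v] by simp
    qed
    show ?thesis
    proof (intro exI[of _ C] conjI)
      show "eqv (mset C) (mset C)" by (rule eqv_refl)
      show "length C = length T" by (rule lenC)
      show "\<forall>m<length T. \<forall>j. j \<notin> Lc \<longrightarrow> (C!m) j = (T!m) j"
      proof (intro allI impI)
        fix m j assume m: "m < length T" and j: "j \<notin> Lc"
        show "(C!m) j = (T!m) j"
        proof (cases "m < s")
          case True then show ?thesis using agree_s j by simp
        next
          case False then show ?thesis using agree_big[of m j] Tz m j by simp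
        qed
      qed
      show "\<forall>j. mset (col C j) = mset (col T j)" by (rule colsC)
    qed
  next
    case False
    obtain i j where ij: "i < s" "j \<notin> Lc" "(C!i) j \<noteq> (T!i) j"
      and ichoice: "i < s - 1 \<or> (\<forall>m<s-1. \<forall>j. j \<notin> Lc \<longrightarrow> (C!m) j = (T!m) j)"
    proof (cases "\<exists>m<s-1. \<exists>j. j \<notin> Lc \<and> (C!m) j \<noteq> (T!m) j")
      case True
      then obtain m j where "m < s - 1" "j \<notin> Lc" "(C!m) j \<noteq> (T!m) j" by blast
      then show ?thesis using that[of m j] by auto
    next
      case F: False
      from `mis C \<noteq> {}` obtain m j where "m < s" "j \<notin> Lc" "(C!m) j \<noteq> (T!m) j" unfolding mis_def by auto
      then show ?thesis using that[of m j] F by auto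
    qed
    have iT: "i < length T" using ij sl by simp
    have Ci0: "(C!i) j = 0" using agrC ij by blast
    define v where "v = (T!i) j"
    have v0: "v \<noteq> 0" using Ci0 ij v_def by simp
    have jU: "j \<in> U" using supp_sub_U[of "T!i" j] Tok iT v0 v_def by simp
    obtain k where k: "s \<le> k" "k < length T" "(C!k) j = v"
    proof (rule ccontr)
      assume "\<not> thesis"
      then have nok: "\<forall>k. s \<le> k \<longrightarrow> k < length T \<longrightarrow> (C!k) j \<noteq> v" using that by blast
      have "{m. m < length T \<and> (C!m) j = v} \<subseteq> {m. m < s \<and> (T!m) j = v}"
      proof
        fix m assume "m \<in> {m. m < length T \<and> (C!m) j = v}"
        then have m: "m < length T" "(C!m) j = v" by auto
        have "m < s"
        proof (rule ccontr)
          assume "\<not> m < s"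
          then have "s \<le> m" by simp
          then show False using nok m by blast
        qed
        moreover have "(T!m) j = v" using agrC `m < s` m(2) v0 ij(2) by metis
        ultimately show "m \<in> {m. m < s \<and> (T!m) j = v}" by simp
      qed
      moreover have "i \<in> {m. m < s \<and> (T!m) j = v}" "i \<notin> {m. m < length T \<and> (C!m) j = v}"
        using ij Ci0 v0 v_def by auto
      ultimately have "{m. m < length T \<and> (C!m) j = v} \<subset> {m. m < s \<and> (T!m) j = v}" by blast
      then have "card {m. m < length T \<and> (C!m) j = v} < card {m. m < s \<and> (T!m) j = v}"
        by (simp add: psubset_card_mono)
      then show False using cnt[of j v] Tsub[OF v0 ij(2)] by simp
    qed
    have ki: "i \<noteq> k" using ij(1) k(1) by simp
    have iC: "i < length C" "k < length C" using iT k lenC by auto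
    define C' where "C' = exch C i k j"
    have C'i: "C'!i = (C!i)(j := v)" using iC ki k(3) by (simp add: C'_def nth_exch)
    have C'k: "C'!k = (C!k)(j := 0)" using iC ki Ci0 by (simp add: C'_def nth_exch)
    have C'm: "C'!m = C!m" if "m \<noteq> i" "m \<noteq> k" "m < length C" for m
      using iC ki that by (simp add: C'_def nth_exch)
    have suppCi: "supp (C!i) \<subseteq> supp (T!i) \<union> Lc"
      using agrC ij(1) by (auto simp: supp_def)
    have suppC'i: "supp (C'!i) \<subseteq> supp (T!i) \<union> Lc"
      using suppCi v0 unfolding C'i v_def by (auto simp: supp_def)
    have okC'i: "supp (C'!i) \<in> D" using sub_ok[OF _ suppC'i] Tok iT by blast
    have "supp (C'!k) \<subseteq> supp (C!k)" unfolding C'k by (auto simp: supp_def)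
    then have okC'k: "supp (C'!k) \<in> D" using down CokC iC by blast
    have ok1: "supp ((C!i)(j := (C!k) j)) \<in> D" using okC'i C'i k(3) by simp
    have ok2: "supp ((C!k)(j := (C!i) j)) \<in> D" using okC'k C'k Ci0 by simp
    have e: "eqv (mset C) (mset C')"
      unfolding C'_def
    proof (rule GE[OF iC ki])
      show "supp (C!i) \<union> supp (C!k) \<in> D \<or> (\<exists>w<length C. w \<noteq> i \<and> w \<noteq> k \<and> supp (C!w) \<subseteq> Lc \<and> supp (C!i) \<in> D
        \<and> supp (C!k) \<in> D \<and> supp ((C!i)(j := (C!k) j)) \<in> D \<and> supp ((C!k)(j := (C!i) j)) \<in> D)"
      proof (cases "i < s - 1")
        case True
        then have "\<forall>j. j \<notin> Lc \<longrightarrow> (C!(s-1)) j = 0" using ordC ij by blast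
        then have w: "supp (C!(s-1)) \<subseteq> Lc" by (auto simp: supp_def)
        have "s - 1 < length C" "s - 1 \<noteq> i" "s - 1 \<noteq> k" using True k lenC by auto
        moreover have "supp (C!i) \<in> D" "supp (C!k) \<in> D" using CokC iC by auto
        ultimately show ?thesis using w ok1 ok2 by blast
      next
        case False
        then have fin: "\<forall>m<s-1. \<forall>j. j \<notin> Lc \<longrightarrow> (C!m) j = (T!m) j" using ichoice by blast
        have is1: "i = s - 1" using False ij(1) by simp
        have "supp (C!k) \<subseteq> supp (T!i) \<union> Lc"
        proof
          fix j' assume j': "j' \<in> supp (C!k)"
          show "j' \<in> supp (T!i) \<union> Lc"
          proof (cases "j' \<in> Lc")
            case True then show ?thesis by simp
          next
            case notL: False
            define v' where "v' = (C!k) j'"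
            have v'0: "v' \<noteq> 0" using j' v'_def by (simp add: supp_def)
            have "(T!i) j' = v'"
            proof (rule ccontr)
              assume ne: "(T!i) j' \<noteq> v'"
              have "{m. m < s \<and> (T!m) j' = v'} = {m. m < s - 1 \<and> (C!m) j' = v'}"
              proof (rule Collect_cong)
                fix m show "(m < s \<and> (T!m) j' = v') = (m < s - 1 \<and> (C!m) j' = v')"
                proof (cases "m < s - 1")
                  case True
                  then have "(C!m) j' = (T!m) j'" using fin notL by blast
                  then show ?thesis using True by auto
                next
                  case False
                  have "\<not> (m < s \<and> (T!m) j' = v')"
                  proof
                    assume h: "m < s \<and> (T!m) j' = v'"
                    then have "m = i" using False is1 by linarith
                    then show False using h ne by simp
                  qed
                  then show ?thesis using False by simp
                qed
              qed
              moreover have "{m. m < s - 1 \<and> (C!m) j' = v'} \<subset> {m. m < length T \<and> (C!m) j' = v'}"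
              proof -
                have "{m. m < s - 1 \<and> (C!m) j' = v'} \<subseteq> {m. m < length T \<and> (C!m) j' = v'}" using sl by auto
                moreover have "k \<in> {m. m < length T \<and> (C!m) j' = v'}" "k \<notin> {m. m < s - 1 \<and> (C!m) j' = v'}"
                  using k(1,2) v'_def by auto
                ultimately show ?thesis by blast
              qed
              ultimately have "card {m. m < s \<and> (T!m) j' = v'} < card {m. m < length T \<and> (C!m) j' = v'}"
                by (simp add: psubset_card_mono)
              then show False using cnt[of j' v'] Tsub[OF v'0 notL] by simp
            qed
            then show ?thesis using v'0 by (simp add: supp_def)
          qed
        qed
        then have "supp (C!i) \<union> supp (C!k) \<subseteq> supp (T!i) \<union> Lc" using suppCi by blast
        then show ?thesis using sub_ok Tok iT by blast
      qed
    qed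
    have len': "length C' = length T" using lenC by (simp add: C'_def)
    have agr': "\<forall>m<s. \<forall>j'. j' \<notin> Lc \<longrightarrow> (C'!m) j' \<noteq> 0 \<longrightarrow> (C'!m) j' = (T!m) j'"
    proof (intro allI impI)
      fix m j' assume m: "m < s" and j': "j' \<notin> Lc" "(C'!m) j' \<noteq> 0"
      show "(C'!m) j' = (T!m) j'"
      proof (cases "m = i")
        case True then show ?thesis using agrC m j' C'i v_def by (cases "j' = j") auto
      next
        case False
        then have "C'!m = C!m" using C'm[of m] m k(1) iC sl lenC by simp
        then show ?thesis using agrC m j' by simp
      qed
    qed
    have Cok': "\<forall>m<length C'. supp (C'!m) \<in> D"
    proof (intro allI impI)
      fix m assume m: "m < length C'"
      show "supp (C'!m) \<in> D"
        using okC'i okC'k C'm[of m] CokC m by (cases "m = i \<or> m = k") (auto simp: C'_def)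
    qed
    have cols': "\<forall>j'. mset (col C' j') = mset (col T j')"
      using colsC col_exch[OF iC ki] by (simp add: C'_def)
    have ord': "(\<exists>m<s-1. \<exists>j'. j' \<notin> Lc \<and> (C'!m) j' \<noteq> (T!m) j') \<longrightarrow> (\<forall>j'. j' \<notin> Lc \<longrightarrow> (C'!(s-1)) j' = 0)"
    proof (cases "i < s - 1")
      case True
      then have z: "\<forall>j. j \<notin> Lc \<longrightarrow> (C!(s-1)) j = 0" using ordC ij by blast
      have "C'!(s-1) = C!(s-1)" using C'm[of "s-1"] True k(1) iC lenC sl by simp
      then show ?thesis using z by simp
    next
      case False
      then have fin: "\<forall>m<s-1. \<forall>j. j \<notin> Lc \<longrightarrow> (C!m) j = (T!m) j" using ichoice by blast
      have "\<forall>m<s-1. C'!m = C!m" using C'm False k(1) iC lenC sl by auto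
      then show ?thesis using fin by auto
    qed
    have sub: "mis C' \<subseteq> mis C - {(i,j)}"
    proof
      fix p assume p: "p \<in> mis C'"
      obtain m j' where p': "p = (m, j')" by (cases p)
      have m: "m < s" "j' \<in> U" "j' \<notin> Lc" "(C'!m) j' \<noteq> (T!m) j'" using p p' unfolding mis_def by auto
      show "p \<in> mis C - {(i,j)}"
      proof (cases "m = i")
        case True
        then show ?thesis using m p' C'i v_def unfolding mis_def by (cases "j' = j") auto
      next
        case False
        then have "C'!m = C!m" using C'm[of m] m(1) k(1) iC sl lenC by simp
        then show ?thesis using m p' False unfolding mis_def by auto
      qed
    qed
    moreover have "(i,j) \<in> mis C" unfolding mis_def using ij jU by auto
    ultimately have "mis C' \<subset> mis C" by blast
    then have "card (mis C') < card (mis C)" using finmis by (simp add: psubset_card_mono)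
    then obtain C'' where C'': "eqv (mset C') (mset C'')" "length C'' = length T"
      "\<forall>m<length T. \<forall>j. j \<notin> Lc \<longrightarrow> (C''!m) j = (T!m) j" "\<forall>j. mset (col C'' j) = mset (col T j)"
      using less.hyps[OF _ len' agr' Cok' cols' ord'] unfolding mis_def by blast
    show ?thesis using eqv_trans[OF e C''(1)] C''(2-4) by blast
  qed
qed

end


context comb begin

lemma core:
  fixes hs ss ts :: "(nat \<Rightarrow> nat) list"
  assumes l1: "length hs = length ss" and l2: "length ss = length ts"
    and hL: "\<forall>h\<in>set hs. supp h \<subseteq> Lc"
    and sD: "\<forall>r\<in>set ss. supp r \<in> D" and tD: "\<forall>r\<in>set ts. supp r \<in> D"
    and cl: "\<forall>j. mset (col ss j) = mset (col ts j)"
  shows "eqv (mset (hs @ ss)) (mset (ts @ hs))"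
proof (cases "hs = []")
  case True
  then show ?thesis using l1 l2 eqv_refl by simp
next
  case False
  define s where "s = length hs"
  have s0: "0 < s" using False s_def by simp
  define C where "C = hs @ ss"
  define T where "T = ts @ hs"
  have lenCT: "length C = length T" "length T = 2 * s" using l1 l2 by (simp_all add: C_def T_def s_def)
  have hz: "(hs!m) j = 0" if "m < s" "j \<notin> Lc" for m j
  proof -
    have "hs!m \<in> set hs" using that s_def by simp
    then have "supp (hs!m) \<subseteq> Lc" using hL by blast
    then show ?thesis using that(2) by (auto simp: supp_def)
  qed
  have hD: "supp (hs!m) \<in> D" if "m < s" for m
  proof -
    have "hs!m \<in> set hs" using that s_def by simp
    then have "supp (hs!m) \<subseteq> Lc" using hL by blast
    then show ?thesis using down Lc_D by blast
  qed
  have Cm: "C!m = (if m < s then hs!m else ss!(m - s))" for m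
    by (simp add: C_def nth_append s_def)
  have Tm: "T!m = (if m < s then ts!m else hs!(m - s))" for m
    using l1 l2 by (simp add: T_def nth_append s_def)
  have "\<exists>C'. eqv (mset C) (mset C') \<and> length C' = length T \<and> (\<forall>m<length T. \<forall>j. j \<notin> Lc \<longrightarrow> (C'!m) j = (T!m) j)
     \<and> (\<forall>j. mset (col C' j) = mset (col T j))"
  proof (rule phase1[where s = s])
    show "length C = length T" by (rule lenCT(1))
    show "s \<le> length T" using lenCT by simp
    show "\<forall>m<s. \<forall>j. j \<notin> Lc \<longrightarrow> (C!m) j \<noteq> 0 \<longrightarrow> (C!m) j = (T!m) j"
      using hz by (simp add: Cm)
    show "\<forall>m. s \<le> m \<longrightarrow> m < length T \<longrightarrow> (\<forall>j. j \<notin> Lc \<longrightarrow> (T!m) j = 0)"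
      using hz lenCT by (simp add: Tm)
    show "\<forall>m<length C. supp (C!m) \<in> D"
    proof (intro allI impI)
      fix m assume m: "m < length C"
      show "supp (C!m) \<in> D"
      proof (cases "m < s")
        case True then show ?thesis using hD by (simp add: Cm)
      next
        case False
        then have "m - s < length ss" using m lenCT l1 l2 s_def by simp
        then have "ss!(m-s) \<in> set ss" by simp
        then show ?thesis using sD False by (simp add: Cm)
      qed
    qed
    show "\<forall>m<length T. supp (T!m) \<in> D"
    proof (intro allI impI)
      fix m assume m: "m < length T"
      show "supp (T!m) \<in> D"
      proof (cases "m < s")
        case True
        then have "ts!m \<in> set ts" using l1 l2 s_def by simp
        then show ?thesis using tD True by (simp add: Tm)
      next
        case False
        then have "m - s < s" using m lenCT by simp
        then show ?thesis using hD False by (simp add: Tm)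
      qed
    qed
    show "\<forall>j. mset (col C j) = mset (col T j)"
      using cl by (simp add: C_def T_def col_def)
    show "(\<exists>m<s-1. \<exists>j. j \<notin> Lc \<and> (C!m) j \<noteq> (T!m) j) \<longrightarrow> (\<forall>j. j \<notin> Lc \<longrightarrow> (C!(s-1)) j = 0)"
      using hz s0 by (simp add: Cm)
  qed
  then obtain C' where C': "eqv (mset C) (mset C')" "length C' = length T"
    "\<forall>m<length T. \<forall>j. j \<notin> Lc \<longrightarrow> (C'!m) j = (T!m) j" "\<forall>j. mset (col C' j) = mset (col T j)"
    by blast
  have "eqv (mset C') (mset T)"
  proof (rule phase2)
    show "length C' = length T" by (rule C'(2))
    show "\<forall>m<length C'. \<forall>j. j \<notin> Lc \<longrightarrow> (C'!m) j = (T!m) j" using C'(2,3) by simp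
    show "\<forall>j. mset (col C' j) = mset (col T j)" by (rule C'(4))
    show "\<forall>m<length T. supp (T!m) \<in> D"
    proof (intro allI impI)
      fix m assume m: "m < length T"
      show "supp (T!m) \<in> D"
      proof (cases "m < s")
        case True
        then have "ts!m \<in> set ts" using l1 l2 s_def by simp
        then show ?thesis using tD True by (simp add: Tm)
      next
        case False
        then have "m - s < s" using m lenCT by simp
        then show ?thesis using hD False by (simp add: Tm)
      qed
    qed
    have "supp (T!s) \<subseteq> Lc"
    proof
      fix x assume "x \<in> supp (T!s)"
      then have "(hs!0) x \<noteq> 0" by (simp add: Tm supp_def)
      then show "x \<in> Lc" using hz[OF s0, of x] by auto
    qed
    then show "\<exists>w<length T. supp (T!w) \<subseteq> Lc" using lenCT s0 by (intro exI[of _ s]) simp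
  qed
  then show ?thesis using eqv_trans[OF C'(1)] by (simp add: C_def T_def)
qed

end


definition keylist :: "('v \<Rightarrow>\<^sub>0 nat) \<Rightarrow> 'v list" where
  "keylist \<alpha> = (SOME xs. set xs = Poly_Mapping.keys \<alpha> \<and> distinct xs)"

lemma keylist: "set (keylist \<alpha>) = Poly_Mapping.keys \<alpha>" "distinct (keylist \<alpha>)"
proof -
  have "\<exists>xs. set xs = Poly_Mapping.keys \<alpha> \<and> distinct xs" by (rule finite_distinct_list) simp
  then have "set (keylist \<alpha>) = Poly_Mapping.keys \<alpha> \<and> distinct (keylist \<alpha>)"
    unfolding keylist_def by (rule someI_ex)
  then show "set (keylist \<alpha>) = Poly_Mapping.keys \<alpha>" "distinct (keylist \<alpha>)" by auto
qed

definition rowsof :: "('v \<Rightarrow>\<^sub>0 nat) \<Rightarrow> 'v list" where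
  "rowsof \<alpha> = concat (map (\<lambda>\<sigma>. replicate (Poly_Mapping.lookup \<alpha> \<sigma>) \<sigma>) (keylist \<alpha>))"

lemma prod_list_concat_rep:
  "prod_list (map \<phi> (concat (map (\<lambda>\<sigma>. replicate (e \<sigma>) \<sigma>) xs))) = prod_list (map (\<lambda>\<sigma>. \<phi> \<sigma> ^ e \<sigma>) xs)"
  by (induction xs) (simp_all add: prod_list_replicate)

lemma mono_rows: "monom \<phi> \<alpha> = prod_list (map \<phi> (rowsof \<alpha>))"
proof -
  have "monom \<phi> \<alpha> = (\<Prod>v\<in>set (keylist \<alpha>). \<phi> v ^ Poly_Mapping.lookup \<alpha> v)"
    unfolding monom_def keylist(1) ..
  also have "\<dots> = prod_list (map (\<lambda>v. \<phi> v ^ Poly_Mapping.lookup \<alpha> v) (keylist \<alpha>))"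
    by (rule prod.distinct_set_conv_list[OF keylist(2)])
  finally show ?thesis unfolding rowsof_def prod_list_concat_rep by simp
qed

lemma length_concat_rep: "length (concat (map (\<lambda>\<sigma>. replicate (e \<sigma>) \<sigma>) xs)) = sum_list (map e xs)"
  by (induction xs) simp_all

lemma length_rows: "length (rowsof \<alpha>) = mdeg \<alpha>"
proof -
  have "length (rowsof \<alpha>) = sum_list (map (Poly_Mapping.lookup \<alpha>) (keylist \<alpha>))"
    unfolding rowsof_def length_concat_rep ..
  also have "\<dots> = (\<Sum>v\<in>set (keylist \<alpha>). Poly_Mapping.lookup \<alpha> v)"
    by (rule sum_list_distinct_conv_sum_set[OF keylist(2)])
  finally show ?thesis unfolding mdeg_def keylist(1) .
qed

lemma set_rows: "set (rowsof \<alpha>) \<subseteq> Poly_Mapping.keys \<alpha>"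
  unfolding rowsof_def by (auto simp: keylist(1))

lemma count_concat_rep:
  "count (mset (map g (concat (map (\<lambda>\<sigma>. replicate (e \<sigma>) \<sigma>) xs)))) v = sum_list (map (\<lambda>\<sigma>. if g \<sigma> = v then e \<sigma> else 0) xs)"
  by (induction xs) auto

lemma col_count:
  "count (mset (col (rowsof \<alpha>) j)) v = (\<Sum>\<sigma>\<in>Poly_Mapping.keys \<alpha>. if \<sigma> j = v then Poly_Mapping.lookup \<alpha> \<sigma> else 0)"
proof -
  have "count (mset (col (rowsof \<alpha>) j)) v = sum_list (map (\<lambda>\<sigma>. if \<sigma> j = v then Poly_Mapping.lookup \<alpha> \<sigma> else 0) (keylist \<alpha>))"
    unfolding col_def rowsof_def by (rule count_concat_rep)
  also have "\<dots> = (\<Sum>\<sigma>\<in>set (keylist \<alpha>). if \<sigma> j = v then Poly_Mapping.lookup \<alpha> \<sigma> else 0)"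
    by (rule sum_list_distinct_conv_sum_set[OF keylist(2)])
  finally show ?thesis unfolding keylist(1) .
qed

definition Eexp :: "nat \<Rightarrow> ((nat \<Rightarrow> nat) \<Rightarrow>\<^sub>0 nat) \<Rightarrow> (nat \<times> nat) \<Rightarrow>\<^sub>0 nat" where
  "Eexp n \<alpha> = (\<Sum>\<sigma>\<in>Poly_Mapping.keys \<alpha>. \<Sum>i<Poly_Mapping.lookup \<alpha> \<sigma>. \<Sum>j\<in>{1..n}. Poly_Mapping.single (j, \<sigma> j) 1)"

lemma prod_single: "(\<Prod>x\<in>A. Poly_Mapping.single (g x) (1::'k::comm_semiring_1)) = Poly_Mapping.single (\<Sum>x\<in>A. g x) 1"
proof (induction A rule: infinite_finite_induct)
  case (infinite A) then show ?case by simp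
next
  case empty then show ?case by simp
next
  case (insert x F) then show ?case by (simp add: mult_single)
qed

lemma mono_eta: "monom (\<lambda>\<sigma>. \<Prod>j\<in>{1..n}. Var (j, \<sigma> j)) \<alpha> = (Poly_Mapping.single (Eexp n \<alpha>) 1 :: (nat \<times> nat, 'k::comm_semiring_1) mpoly)"
proof -
  have v: "(\<Prod>j\<in>{1..n}. Var (j, \<sigma> j)) = (Poly_Mapping.single (\<Sum>j\<in>{1..n}. Poly_Mapping.single (j, \<sigma> j) 1) 1 :: (nat \<times> nat, 'k) mpoly)" for \<sigma> :: "nat \<Rightarrow> nat"
    unfolding Var_def by (rule prod_single)
  have p: "(Poly_Mapping.single b 1 :: (nat \<times> nat, 'k) mpoly) ^ e = Poly_Mapping.single (\<Sum>i<e. b) 1" for b e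
  proof -
    have "(Poly_Mapping.single b 1 :: (nat \<times> nat, 'k) mpoly) ^ e = (\<Prod>i<e. Poly_Mapping.single b 1)" by simp
    also have "\<dots> = Poly_Mapping.single (\<Sum>i<e. b) 1" by (rule prod_single)
    finally show ?thesis .
  qed
  show ?thesis unfolding monom_def Eexp_def v p by (rule prod_single)
qed

lemma lookup_Eexp:
  "Poly_Mapping.lookup (Eexp n \<alpha>) (j0, v) = (if j0 \<in> {1..n} then (\<Sum>\<sigma>\<in>Poly_Mapping.keys \<alpha>. if \<sigma> j0 = v then Poly_Mapping.lookup \<alpha> \<sigma> else 0) else 0)"
proof -
  have inner: "Poly_Mapping.lookup (\<Sum>j\<in>{1..n}. Poly_Mapping.single (j, \<sigma> j) (1::nat)) (j0, v) = (if j0 \<in> {1..n} \<and> \<sigma> j0 = v then 1 else 0)" for \<sigma> :: "nat \<Rightarrow> nat"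
  proof -
    have "Poly_Mapping.lookup (\<Sum>j\<in>{1..n}. Poly_Mapping.single (j, \<sigma> j) (1::nat)) (j0, v) = (\<Sum>j\<in>{1..n}. if j = j0 then (if \<sigma> j0 = v then 1 else 0) else 0)"
      unfolding lookup_sum by (rule sum.cong[OF refl]) (auto simp: lookup_single when_def)
    also have "\<dots> = (if j0 \<in> {1..n} \<and> \<sigma> j0 = v then 1 else 0)" by (simp add: sum.delta')
    finally show ?thesis .
  qed
  define b where "b \<sigma> = (\<Sum>j\<in>{1..n}. Poly_Mapping.single (j, \<sigma> j) (1::nat))" for \<sigma> :: "nat \<Rightarrow> nat"
  have eq: "Eexp n \<alpha> = (\<Sum>\<sigma>\<in>Poly_Mapping.keys \<alpha>. \<Sum>i<Poly_Mapping.lookup \<alpha> \<sigma>. b \<sigma>)"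
    unfolding Eexp_def b_def ..
  have "Poly_Mapping.lookup (Eexp n \<alpha>) (j0, v) = (\<Sum>\<sigma>\<in>Poly_Mapping.keys \<alpha>. \<Sum>i<Poly_Mapping.lookup \<alpha> \<sigma>. Poly_Mapping.lookup (b \<sigma>) (j0, v))"
    unfolding eq by (simp only: lookup_sum)
  also have "\<dots> = (\<Sum>\<sigma>\<in>Poly_Mapping.keys \<alpha>. Poly_Mapping.lookup \<alpha> \<sigma> * (if j0 \<in> {1..n} \<and> \<sigma> j0 = v then 1 else 0))"
    unfolding b_def inner by simp
  also have "\<dots> = (if j0 \<in> {1..n} then (\<Sum>\<sigma>\<in>Poly_Mapping.keys \<alpha>. if \<sigma> j0 = v then Poly_Mapping.lookup \<alpha> \<sigma> else 0) else 0)"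
    by (auto intro: sum.cong)
  finally show ?thesis .
qed

lemma Eexp_cols:
  assumes "Eexp n \<alpha> = Eexp n \<beta>" "j \<in> {1..n}"
  shows "mset (col (rowsof \<alpha>) j) = mset (col (rowsof \<beta>) j)"
proof (rule multiset_eqI)
  fix v
  have "Poly_Mapping.lookup (Eexp n \<alpha>) (j, v) = Poly_Mapping.lookup (Eexp n \<beta>) (j, v)" using assms by simp
  then show "count (mset (col (rowsof \<alpha>) j)) v = count (mset (col (rowsof \<beta>) j)) v"
    unfolding col_count lookup_Eexp using assms(2) by simp
qed

lemma zero_cols:
  assumes "\<forall>\<sigma>\<in>Poly_Mapping.keys \<alpha>. \<sigma> j = 0" "\<forall>\<sigma>\<in>Poly_Mapping.keys \<beta>. \<sigma> j = 0" "mdeg \<alpha> = mdeg \<beta>"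
  shows "mset (col (rowsof \<alpha>) j) = mset (col (rowsof \<beta>) j)"
proof (rule multiset_eqI)
  fix v
  have a: "count (mset (col (rowsof \<alpha>) j)) v = (if v = 0 then mdeg \<alpha> else 0)"
    unfolding col_count mdeg_def using assms(1) by (auto intro: sum.cong)
  have b: "count (mset (col (rowsof \<beta>) j)) v = (if v = 0 then mdeg \<beta> else 0)"
    unfolding col_count mdeg_def using assms(2) by (auto intro: sum.cong)
  show "count (mset (col (rowsof \<alpha>) j)) v = count (mset (col (rowsof \<beta>) j)) v"
    unfolding a b using assms(3) by simp
qed


lemma facet_above:
  assumes sc: "simplicial_complex n \<Delta>" and J: "J \<in> \<Delta>"
  shows "\<exists>F\<in>facets \<Delta>. J \<subseteq> F"
proof -
  define A where "A = {G\<in>\<Delta>. J \<subseteq> G}"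
  have "\<Delta> \<subseteq> Pow {1..n}" using sc unfolding simplicial_complex_def by blast
  then have "finite \<Delta>" by (rule finite_subset) simp
  then have fA: "finite A" unfolding A_def by simp
  have nA: "A \<noteq> {}" using J unfolding A_def by blast
  obtain m where m: "m \<in> A" "\<forall>b\<in>A. m \<le> b \<longrightarrow> m = b" using finite_has_maximal[OF fA nA] by blast
  have "m \<in> facets \<Delta>" unfolding facets_def using m unfolding A_def by auto
  then show ?thesis using m(1) unfolding A_def by blast
qed

lemma comb_inst:
  assumes sc: "simplicial_complex n \<Delta>"
  shows "comb \<Delta> (\<Inter>(facets \<Delta>)) {1..n} (I_Delta n a \<Delta> :: (nat \<Rightarrow> nat, 'k::comm_ring_1) mpoly set) (xsum n a)"
proof -
  have down: "\<And>J A. J \<in> \<Delta> \<Longrightarrow> A \<subseteq> J \<Longrightarrow> A \<in> \<Delta>" using sc unfolding simplicial_complex_def by blast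
  have Lc_ax: "J \<union> \<Inter>(facets \<Delta>) \<in> \<Delta>" if J: "J \<in> \<Delta>" for J
  proof -
    obtain F where F: "F \<in> facets \<Delta>" "J \<subseteq> F" using facet_above[OF sc J] by blast
    have "F \<in> \<Delta>" using F(1) unfolding facets_def by blast
    moreover have "J \<union> \<Inter>(facets \<Delta>) \<subseteq> F" using F by blast
    ultimately show ?thesis using down by blast
  qed
  have e: "{} \<in> \<Delta>" using sc down unfolding simplicial_complex_def by blast
  show ?thesis
  proof
    show "is_ideal (I_Delta n a \<Delta> :: (nat \<Rightarrow> nat, 'k) mpoly set)" by (rule I_Delta_ideal)
    show "\<And>J A. J \<in> \<Delta> \<Longrightarrow> A \<subseteq> J \<Longrightarrow> A \<in> \<Delta>" by (rule down)
    show "\<And>J. J \<in> \<Delta> \<Longrightarrow> J \<union> \<Inter>(facets \<Delta>) \<in> \<Delta>" by (rule Lc_ax)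
    show "\<Inter>(facets \<Delta>) \<in> \<Delta>" using Lc_ax[OF e] by simp
    show "finite {1..n}" by simp
    show "\<And>J. J \<in> \<Delta> \<Longrightarrow> J \<subseteq> {1..n}" using sc unfolding simplicial_complex_def by blast
    show "\<And>r1 r2 l. supp r1 \<union> supp r2 \<in> \<Delta> \<Longrightarrow>
        (xsum n a r1 * xsum n a r2 - xsum n a (r1(l := r2 l)) * xsum n a (r2(l := r1 l)) :: (nat \<Rightarrow> nat, 'k) mpoly) \<in> I_Delta n a \<Delta>"
      using swap_xsum[OF sc] unfolding supp_def by blast
  qed
qed

lemma expand:
  fixes x :: "'c \<Rightarrow> 'r::comm_ring_1"
  assumes idl: "is_ideal I"
  shows "\<And>k Dd. (\<forall>hs. set hs \<subseteq> Cs \<longrightarrow> length hs = k \<longrightarrow> prod_list (map x hs) * Dd \<in> I) \<Longrightarrow>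
     set xs \<subseteq> ideal_gen (x ` Cs) \<Longrightarrow> length xs = k \<Longrightarrow> prod_list xs * Dd \<in> I"
proof (induction xs)
  case Nil
  then show ?case using Nil.prems(1)[rule_format, of "[]"] by simp
next
  case (Cons y xs)
  then obtain k' where k': "k = Suc k'" by (cases k) auto
  have y: "y \<in> ideal_gen (x ` Cs)" using Cons.prems by simp
  then obtain F r where F: "finite F" "F \<subseteq> x ` Cs" "y = (\<Sum>g\<in>F. r g * g)" unfolding ideal_gen_def by auto
  have "prod_list (y # xs) * Dd = (\<Sum>g\<in>F. r g * g) * (prod_list xs * Dd)"
    unfolding F(3) by (simp add: mult.assoc)
  also have "\<dots> = (\<Sum>g\<in>F. (r g * g) * (prod_list xs * Dd))" by (rule sum_distrib_right)
  also have "\<dots> = (\<Sum>g\<in>F. r g * (prod_list xs * (g * Dd)))"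
    by (rule sum.cong[OF refl]) (simp only: ac_simps)
  also have "\<dots> \<in> I"
  proof (rule ideal_sum[OF idl])
    fix g assume g: "g \<in> F"
    then obtain c where c: "c \<in> Cs" "g = x c" using F(2) by blast
    have "prod_list xs * (g * Dd) \<in> I"
    proof (rule Cons.IH)
      show "\<forall>hs. set hs \<subseteq> Cs \<longrightarrow> length hs = k' \<longrightarrow> prod_list (map x hs) * (g * Dd) \<in> I"
      proof (intro allI impI)
        fix hs assume hs: "set hs \<subseteq> Cs" "length hs = k'"
        have "prod_list (map x (c # hs)) * Dd \<in> I" using Cons.prems(1)[rule_format, of "c # hs"] hs c k' by simp
        then show "prod_list (map x hs) * (g * Dd) \<in> I" using c by (simp add: ac_simps)
      qed
      show "set xs \<subseteq> ideal_gen (x ` Cs)" using Cons.prems by simp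
      show "length xs = k'" using Cons.prems k' by simp
    qed
    then show "r g * (prod_list xs * (g * Dd)) \<in> I" by (rule ideal_mult_left[OF idl])
  qed
  finally show ?case .
qed

lemma expand2:
  fixes L :: "'r::comm_ring_1 set"
  assumes idl: "is_ideal I" and g: "g \<in> ideal_pow L k"
    and H: "\<forall>xs. length xs = k \<longrightarrow> set xs \<subseteq> L \<longrightarrow> prod_list xs * Dd \<in> I"
  shows "g * Dd \<in> I"
proof -
  obtain F r where F: "finite F" "F \<subseteq> {prod_list xs | xs. length xs = k \<and> set xs \<subseteq> L}" "g = (\<Sum>p\<in>F. r p * p)"
    using g unfolding ideal_pow_def ideal_gen_def by auto
  have "g * Dd = (\<Sum>p\<in>F. (r p * p) * Dd)" unfolding F(3) by (rule sum_distrib_right)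
  also have "\<dots> = (\<Sum>p\<in>F. r p * (p * Dd))" by (simp only: mult.assoc)
  also have "\<dots> \<in> I"
  proof (rule ideal_sum[OF idl])
    fix p assume "p \<in> F"
    then obtain xs where "p = prod_list xs" "length xs = k" "set xs \<subseteq> L" using F(2) by blast
    then have "p * Dd \<in> I" using H by blast
    then show "r p * (p * Dd) \<in> I" by (rule ideal_mult_left[OF idl])
  qed
  finally show ?thesis .
qed


lemma single_sum: "(\<Sum>x\<in>A. Poly_Mapping.single k (h x)) = Poly_Mapping.single k (\<Sum>x\<in>A. h x)"
proof (induction A rule: infinite_finite_induct)
  case (infinite A) then show ?case by simp
next
  case empty then show ?case by simp
next
  case (insert x F) then show ?case by (simp add: single_add)
qed

lemma S_vars_props:
  assumes sc: "simplicial_complex n \<Delta>" and r: "r \<in> S_vars a \<Delta>"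
  shows "supp r \<in> \<Delta>" "j \<notin> {1..n} \<Longrightarrow> r j = 0"
proof -
  obtain J where J: "J \<in> \<Delta>" "r \<in> cells a J" using r unfolding S_vars_def by blast
  have down: "\<And>J A. J \<in> \<Delta> \<Longrightarrow> A \<subseteq> J \<Longrightarrow> A \<in> \<Delta>" and Jn: "J \<subseteq> {1..n}"
    using sc J(1) unfolding simplicial_complex_def by blast+
  have "supp r \<subseteq> J"
  proof
    fix x assume "x \<in> supp r"
    then have rx: "r x \<noteq> 0" by (simp add: supp_def)
    show "x \<in> J"
    proof (rule ccontr)
      assume "x \<notin> J"
      then have "r x = 0" using J(2) unfolding cells_def by blast
      then show False using rx by simp
    qed
  qed
  then show "supp r \<in> \<Delta>" using down J(1) by blast
  show "j \<notin> {1..n} \<Longrightarrow> r j = 0" using J(2) Jn unfolding cells_def by auto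
qed

lemma cells_supp: "r \<in> cells a J \<Longrightarrow> supp r \<subseteq> J"
proof
  fix x assume r: "r \<in> cells a J" and "x \<in> supp r"
  then have rx: "r x \<noteq> 0" by (simp add: supp_def)
  show "x \<in> J"
  proof (rule ccontr)
    assume "x \<notin> J"
    then have "r x = 0" using r unfolding cells_def by blast
    then show False using rx by simp
  qed
qed

lemma (in comb) P_list: "P (mset xs) = prod_list (map x xs)"
proof -
  have "image_mset x (mset xs) = mset (map x xs)" by simp
  then show ?thesis unfolding P_def by (simp only: prod_mset_prod_list)
qed

lemma BL:
  fixes \<alpha> \<beta> :: "(nat \<Rightarrow> nat) \<Rightarrow>\<^sub>0 nat"
  assumes sc: "simplicial_complex n \<Delta>"
    and ka: "Poly_Mapping.keys \<alpha> \<subseteq> S_vars a \<Delta>" and kb: "Poly_Mapping.keys \<beta> \<subseteq> S_vars a \<Delta>"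
    and E: "Eexp n \<alpha> = Eexp n \<beta>" and deg: "mdeg \<alpha> = mdeg \<beta>"
    and g: "g \<in> ideal_pow (margin_ideal n a (\<Inter>(facets \<Delta>))) (mdeg \<alpha>)"
  shows "g * (monom (xsum n a) \<alpha> - monom (xsum n a) \<beta>) \<in> (I_Delta n a \<Delta> :: (nat \<Rightarrow> nat, 'k::comm_ring_1) mpoly set)"
proof -
  interpret c: comb \<Delta> "\<Inter>(facets \<Delta>)" "{1..n}" "I_Delta n a \<Delta> :: (nat \<Rightarrow> nat, 'k) mpoly set" "xsum n a"
    by (rule comb_inst[OF sc])
  define Lc where "Lc = \<Inter>(facets \<Delta>)"
  define Dd where "Dd = (monom (xsum n a) \<alpha> - monom (xsum n a) \<beta> :: (nat \<Rightarrow> nat, 'k) mpoly)"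
  have cl: "\<forall>j. mset (col (rowsof \<alpha>) j) = mset (col (rowsof \<beta>) j)"
  proof
    fix j show "mset (col (rowsof \<alpha>) j) = mset (col (rowsof \<beta>) j)"
    proof (cases "j \<in> {1..n}")
      case True then show ?thesis by (rule Eexp_cols[OF E])
    next
      case False
      have za: "\<forall>\<sigma>\<in>Poly_Mapping.keys \<alpha>. \<sigma> j = 0"
      proof
        fix \<sigma> assume "\<sigma> \<in> Poly_Mapping.keys \<alpha>"
        then have "\<sigma> \<in> S_vars a \<Delta>" using ka by blast
        then show "\<sigma> j = 0" using S_vars_props(2)[OF sc _ False] by blast
      qed
      have zb: "\<forall>\<sigma>\<in>Poly_Mapping.keys \<beta>. \<sigma> j = 0"
      proof
        fix \<sigma> assume "\<sigma> \<in> Poly_Mapping.keys \<beta>"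
        then have "\<sigma> \<in> S_vars a \<Delta>" using kb by blast
        then show "\<sigma> j = 0" using S_vars_props(2)[OF sc _ False] by blast
      qed
      show ?thesis by (rule zero_cols[OF za zb deg])
    qed
  qed
  have A: "\<forall>hs. set hs \<subseteq> cells a Lc \<longrightarrow> length hs = mdeg \<alpha> \<longrightarrow> prod_list (map (xsum n a) hs) * Dd \<in> I_Delta n a \<Delta>"
  proof (intro allI impI)
    fix hs assume hs: "set hs \<subseteq> cells a Lc" "length hs = mdeg \<alpha>"
    have "c.eqv (mset (hs @ rowsof \<alpha>)) (mset (rowsof \<beta> @ hs))"
    proof (rule c.core)
      show "length hs = length (rowsof \<alpha>)" by (simp add: length_rows hs(2))
      show "length (rowsof \<alpha>) = length (rowsof \<beta>)" by (simp add: length_rows deg)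
      show "\<forall>h\<in>set hs. supp h \<subseteq> \<Inter>(facets \<Delta>)"
      proof
        fix h assume "h \<in> set hs"
        then have "h \<in> cells a Lc" using hs(1) by blast
        then show "supp h \<subseteq> \<Inter>(facets \<Delta>)" unfolding Lc_def by (rule cells_supp)
      qed
      show "\<forall>r\<in>set (rowsof \<alpha>). supp r \<in> \<Delta>"
      proof
        fix r assume "r \<in> set (rowsof \<alpha>)"
        then have "r \<in> S_vars a \<Delta>" using set_rows[of \<alpha>] ka by blast
        then show "supp r \<in> \<Delta>" by (rule S_vars_props(1)[OF sc])
      qed
      show "\<forall>r\<in>set (rowsof \<beta>). supp r \<in> \<Delta>"
      proof
        fix r assume "r \<in> set (rowsof \<beta>)"
        then have "r \<in> S_vars a \<Delta>" using set_rows[of \<beta>] kb by blast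
        then show "supp r \<in> \<Delta>" by (rule S_vars_props(1)[OF sc])
      qed
      show "\<forall>j. mset (col (rowsof \<alpha>) j) = mset (col (rowsof \<beta>) j)" by (rule cl)
    qed
    then have "(prod_list (map (xsum n a) (hs @ rowsof \<alpha>)) - prod_list (map (xsum n a) (rowsof \<beta> @ hs)) :: (nat \<Rightarrow> nat, 'k) mpoly) \<in> I_Delta n a \<Delta>"
      unfolding c.eqv_def c.P_list .
    then show "prod_list (map (xsum n a) hs) * Dd \<in> I_Delta n a \<Delta>"
      unfolding Dd_def by (simp add: mono_rows algebra_simps)
  qed
  have "g * Dd \<in> I_Delta n a \<Delta>"
  proof (rule expand2[OF I_Delta_ideal g])
    show "\<forall>xs. length xs = mdeg \<alpha> \<longrightarrow> set xs \<subseteq> margin_ideal n a (\<Inter>(facets \<Delta>)) \<longrightarrow> prod_list xs * Dd \<in> I_Delta n a \<Delta>"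
    proof (intro allI impI)
      fix xs :: "(nat \<Rightarrow> nat, 'k) mpoly list"
      assume xs: "length xs = mdeg \<alpha>" "set xs \<subseteq> margin_ideal n a (\<Inter>(facets \<Delta>))"
      show "prod_list xs * Dd \<in> I_Delta n a \<Delta>"
        by (rule expand[OF I_Delta_ideal, where Cs="cells a Lc" and x="xsum n a"])
          (use A xs in \<open>simp_all add: margin_ideal_def Lc_def\<close>)
    qed
  qed
  then show ?thesis unfolding Dd_def .
qed


lemma eta_single: "eta n (Poly_Mapping.single \<alpha> c) = (Poly_Mapping.single (Eexp n \<alpha>) c :: (nat \<times> nat, 'k::comm_ring_1) mpoly)"
  unfolding eta_def subst_single mono_eta single0_mult_single by simp

lemma tau_single: "tau n a (Poly_Mapping.single \<alpha> c) = Poly_Mapping.single 0 c * monom (xsum n a) \<alpha>"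
  unfolding tau_def subst_single ..

lemma conj1:
  assumes sc: "simplicial_complex n \<Delta>" and fQ: "f \<in> Q_Delta n a \<Delta>" and bin: "binomial_of_degree s f"
    and g: "g \<in> ideal_pow (margin_ideal n a (\<Inter>(facets \<Delta>))) s"
  shows "g * tau n a f \<in> (I_Delta n a \<Delta> :: (nat \<Rightarrow> nat, 'k::comm_ring_1) mpoly set)"
proof -
  obtain \<alpha> \<beta> c d where f: "f = Poly_Mapping.single \<alpha> c + Poly_Mapping.single \<beta> d"
    and da: "mdeg \<alpha> = s" and db: "mdeg \<beta> = s"
    using bin unfolding binomial_of_degree_def by blast
  have tauf: "tau n a f = Poly_Mapping.single 0 c * monom (xsum n a) \<alpha> + Poly_Mapping.single 0 d * monom (xsum n a) \<beta>"
    unfolding f tau_def subst_add subst_single ..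
  have etaf: "eta n f = (Poly_Mapping.single (Eexp n \<alpha>) c + Poly_Mapping.single (Eexp n \<beta>) d :: (nat \<times> nat, 'k) mpoly)"
    unfolding f eta_def subst_add by (simp only: eta_single[unfolded eta_def])
  have eta0: "eta n f = 0" using fQ unfolding Q_Delta_def by blast
  have vf: "vars f \<subseteq> S_vars a \<Delta>" using fQ unfolding Q_Delta_def by blast
  have I0: "0 \<in> (I_Delta n a \<Delta> :: (nat \<Rightarrow> nat, 'k) mpoly set)" by (rule ideal_0[OF I_Delta_ideal])
  show ?thesis
  proof (cases "Eexp n \<alpha> = Eexp n \<beta>")
    case False
    have "Poly_Mapping.lookup (eta n f) (Eexp n \<alpha>) = c" unfolding etaf lookup_add using False by (simp add: lookup_single)
    then have c0: "c = 0" using eta0 by simp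
    have "Poly_Mapping.lookup (eta n f) (Eexp n \<beta>) = d" unfolding etaf lookup_add using False by (simp add: lookup_single)
    then have d0: "d = 0" using eta0 by simp
    show ?thesis using I0 unfolding tauf c0 d0 by simp
  next
    case True
    have "Poly_Mapping.lookup (eta n f) (Eexp n \<alpha>) = c + d" unfolding etaf lookup_add using True by simp
    then have "c + d = 0" using eta0 by simp
    then have dc: "d = - c" by (simp add: add_eq_0_iff)
    have tauf2: "tau n a f = Poly_Mapping.single 0 c * (monom (xsum n a) \<alpha> - monom (xsum n a) \<beta>)"
      unfolding tauf dc single_uminus by (simp add: algebra_simps)
    show ?thesis
    proof (cases "c = 0 \<or> \<alpha> = \<beta>")
      case True
      then have "tau n a f = 0" unfolding tauf2 by auto
      then show ?thesis using I0 by simp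
    next
      case False
      have la: "Poly_Mapping.lookup f \<alpha> = c" unfolding f lookup_add using False by (auto simp: lookup_single when_def)
      have lb: "Poly_Mapping.lookup f \<beta> = d" unfolding f lookup_add using False by (simp add: lookup_single)
      have "\<alpha> \<in> Poly_Mapping.keys f" "\<beta> \<in> Poly_Mapping.keys f" using la lb dc False by (auto simp: in_keys_iff)
      then have ka: "Poly_Mapping.keys \<alpha> \<subseteq> S_vars a \<Delta>" and kb: "Poly_Mapping.keys \<beta> \<subseteq> S_vars a \<Delta>"
        using vf unfolding vars_def by blast+
      have "g * (monom (xsum n a) \<alpha> - monom (xsum n a) \<beta>) \<in> (I_Delta n a \<Delta> :: (nat \<Rightarrow> nat, 'k) mpoly set)"
        by (rule BL[OF sc ka kb True]) (use da db g in simp_all)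
      then have "Poly_Mapping.single 0 c * (g * (monom (xsum n a) \<alpha> - monom (xsum n a) \<beta>)) \<in> I_Delta n a \<Delta>"
        by (rule ideal_mult_left[OF I_Delta_ideal])
      then show ?thesis unfolding tauf2 by (simp add: ac_simps)
    qed
  qed
qed


lemma x0_in_L:
  assumes sc: "simplicial_complex n \<Delta>"
  shows "(xsum n a (\<lambda>_. 0) :: (nat \<Rightarrow> nat, 'k::comm_ring_1) mpoly) \<in> margin_ideal n a (\<Inter>(facets \<Delta>))"
proof -
  interpret c: comb \<Delta> "\<Inter>(facets \<Delta>)" "{1..n}" "I_Delta n a \<Delta> :: (nat \<Rightarrow> nat, 'k) mpoly set" "xsum n a"
    by (rule comb_inst[OF sc])
  have Ln: "\<Inter>(facets \<Delta>) \<subseteq> {1..n}" using c.DU[OF c.Lc_D] .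
  have e: "extc a (\<Inter>(facets \<Delta>)) (\<lambda>_. 0) = cells a (\<Inter>(facets \<Delta>))" unfolding extc_def by simp
  have s: "(\<Sum>i\<in>cells a (\<Inter>(facets \<Delta>)). xsum n a i) = (xsum n a (\<lambda>_. 0) :: (nat \<Rightarrow> nat, 'k) mpoly)"
    using sum_ext[OF Ln, of "\<lambda>_. 0" a] unfolding e by simp
  have "(xsum n a (\<lambda>_. 0) :: (nat \<Rightarrow> nat, 'k) mpoly) = (\<Sum>i\<in>cells a (\<Inter>(facets \<Delta>)). xsum n a i)"
    by (rule sym[OF s])
  also have "\<dots> \<in> margin_ideal n a (\<Inter>(facets \<Delta>))"
    unfolding margin_ideal_def
    by (rule ideal_sum[OF ideal_gen_ideal]) (rule ideal_gen_base, blast)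
  finally show ?thesis .
qed

lemma pow_in_ideal_pow: "x \<in> L \<Longrightarrow> x ^ k \<in> ideal_pow L k"
  unfolding ideal_pow_def
  by (rule ideal_gen_base, rule CollectI, rule exI[of _ "replicate k x"]) (auto simp: prod_list_replicate)

lemma sat:
  assumes n1: "n \<ge> 1" and sc: "simplicial_complex n \<Delta>" and fQ: "f \<in> Q_Delta n a \<Delta>"
  shows "tau n a f \<in> saturation (I_Delta n a \<Delta> :: (nat \<Rightarrow> nat, 'k::comm_ring_1) mpoly set) (xsum n a (\<lambda>_. 0))"
proof -
  define K where "K = Poly_Mapping.keys f"
  define x0 where "x0 = (xsum n a (\<lambda>_. 0) :: (nat \<Rightarrow> nat, 'k) mpoly)"
  define R where "R e = (SOME m'. m' \<in> K \<and> Eexp n m' = e)" for e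
  define h where "h m = (monom (xsum n a) m - monom (xsum n a) (R (Eexp n m)) :: (nat \<Rightarrow> nat, 'k) mpoly)" for m
  have fK: "finite K" unfolding K_def by simp
  have repK: "R (Eexp n m) \<in> K \<and> Eexp n (R (Eexp n m)) = Eexp n m" if "m \<in> K" for m
    unfolding R_def by (rule someI[of _ m]) (use that in simp)
  have vf: "vars f \<subseteq> S_vars a \<Delta>" using fQ unfolding Q_Delta_def by blast
  have kS: "Poly_Mapping.keys m \<subseteq> S_vars a \<Delta>" if "m \<in> K" for m
    using vf that unfolding vars_def K_def by blast
  have deg: "mdeg (R (Eexp n m)) = mdeg m" if "m \<in> K" for m
  proof -
    have "mset (col (rowsof (R (Eexp n m))) 1) = mset (col (rowsof m) 1)"
      by (rule Eexp_cols) (use repK[OF that] n1 in auto)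
    then have "length (col (rowsof (R (Eexp n m))) 1) = length (col (rowsof m) 1)"
      by (metis size_mset)
    then show ?thesis by (simp add: col_def length_rows)
  qed
  define Dg where "Dg = (\<Sum>m\<in>K. mdeg m)"
  have trm: "x0 ^ Dg * h m \<in> I_Delta n a \<Delta>" if m: "m \<in> K" for m
  proof -
    have "x0 ^ mdeg m * h m \<in> I_Delta n a \<Delta>" unfolding h_def
      by (rule BL[OF sc kS[OF m] kS[OF conjunct1[OF repK[OF m]]] conjunct2[OF repK[OF m], symmetric] deg[OF m, symmetric]])
        (rule pow_in_ideal_pow, unfold x0_def, rule x0_in_L[OF sc])
    then have "x0 ^ (Dg - mdeg m) * (x0 ^ mdeg m * h m) \<in> I_Delta n a \<Delta>"
      by (rule ideal_mult_left[OF I_Delta_ideal])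
    moreover have "mdeg m \<le> Dg" unfolding Dg_def by (rule member_le_sum) (use m fK in auto)
    ultimately show ?thesis by (simp add: mult.assoc[symmetric] power_add[symmetric])
  qed
  have tauf: "tau n a f = (\<Sum>m\<in>K. Poly_Mapping.single 0 (Poly_Mapping.lookup f m) * monom (xsum n a) m)"
    unfolding tau_def by (rule subst_eq[OF fK]) (simp add: K_def)
  have etaf: "eta n f = (\<Sum>m\<in>K. Poly_Mapping.single (Eexp n m) (Poly_Mapping.lookup f m) :: (nat \<times> nat, 'k) mpoly)"
  proof -
    have "eta n f = (\<Sum>m\<in>K. Poly_Mapping.single 0 (Poly_Mapping.lookup f m) * monom (\<lambda>\<sigma>. \<Prod>j\<in>{1..n}. Var (j, \<sigma> j)) m :: (nat \<times> nat, 'k) mpoly)"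
      unfolding eta_def by (rule subst_eq[OF fK]) (simp add: K_def)
    also have "\<dots> = (\<Sum>m\<in>K. Poly_Mapping.single (Eexp n m) (Poly_Mapping.lookup f m))"
      unfolding mono_eta single0_mult_single by simp
    finally show ?thesis .
  qed
  have fib0: "(\<Sum>m\<in>{m. m \<in> K \<and> Eexp n m = e}. Poly_Mapping.lookup f m) = 0" for e
  proof -
    have "Poly_Mapping.lookup (eta n f) e = (\<Sum>m\<in>K. if Eexp n m = e then Poly_Mapping.lookup f m else 0)"
      unfolding etaf lookup_sum by (rule sum.cong[OF refl]) (simp add: lookup_single when_def)
    also have "\<dots> = (\<Sum>m\<in>{m. m \<in> K \<and> Eexp n m = e}. Poly_Mapping.lookup f m)"
      using sum.inter_filter[OF fK, of "Poly_Mapping.lookup f" "\<lambda>m. Eexp n m = e"] by simp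
    finally show ?thesis using fQ unfolding Q_Delta_def by simp
  qed
  have zero: "(\<Sum>m\<in>K. Poly_Mapping.single 0 (Poly_Mapping.lookup f m) * monom (xsum n a) (R (Eexp n m))) = 0"
  proof -
    have "(\<Sum>m\<in>K. Poly_Mapping.single 0 (Poly_Mapping.lookup f m) * monom (xsum n a) (R (Eexp n m)))
      = (\<Sum>e\<in>Eexp n ` K. \<Sum>m\<in>{m. m \<in> K \<and> Eexp n m = e}. Poly_Mapping.single 0 (Poly_Mapping.lookup f m) * monom (xsum n a) (R (Eexp n m)))"
      by (rule sum.group[OF fK, symmetric]) (use fK in auto)
    also have "\<dots> = (\<Sum>e\<in>Eexp n ` K. \<Sum>m\<in>{m. m \<in> K \<and> Eexp n m = e}. Poly_Mapping.single 0 (Poly_Mapping.lookup f m) * monom (xsum n a) (R e))"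
      by (rule sum.cong[OF refl], rule sum.cong) auto
    also have "\<dots> = (\<Sum>e\<in>Eexp n ` K. Poly_Mapping.single 0 (\<Sum>m\<in>{m. m \<in> K \<and> Eexp n m = e}. Poly_Mapping.lookup f m) * monom (xsum n a) (R e))"
      by (simp only: sum_distrib_right[symmetric] single_sum)
    also have "\<dots> = 0" by (simp add: fib0)
    finally show ?thesis .
  qed
  have tauf2: "tau n a f = (\<Sum>m\<in>K. Poly_Mapping.single 0 (Poly_Mapping.lookup f m) * h m)"
    unfolding tauf h_def right_diff_distrib sum_subtractf zero by simp
  have "x0 ^ Dg * tau n a f = (\<Sum>m\<in>K. Poly_Mapping.single 0 (Poly_Mapping.lookup f m) * (x0 ^ Dg * h m))"
    unfolding tauf2 sum_distrib_left by (rule sum.cong[OF refl]) (simp only: ac_simps)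
  also have "\<dots> \<in> I_Delta n a \<Delta>"
    by (rule ideal_sum[OF I_Delta_ideal], rule ideal_mult_left[OF I_Delta_ideal], rule trm)
  finally show ?thesis unfolding saturation_def x0_def by blast
qed


theorem proposition4p3:
  fixes n :: nat and a :: "nat \<Rightarrow> nat" and \<Delta> :: "nat set set"
    and f :: "(nat \<Rightarrow> nat, 'k::field) mpoly" and s :: nat
  assumes "n \<ge> 1"
    and "\<forall>j\<in>{1..n}. a j \<ge> 1"
    and "simplicial_complex n \<Delta>"
    and "f \<in> Q_Delta n a \<Delta>"
    and "binomial_of_degree s f"
  shows "(\<forall>g\<in>ideal_pow (margin_ideal n a (\<Inter>(facets \<Delta>))) s. g * tau n a f \<in> I_Delta n a \<Delta>)
       \<and> tau n a f \<in> ideal_quot (I_Delta n a \<Delta>) (ideal_pow (margin_ideal n a (\<Inter>(facets \<Delta>))) s)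
       \<and> tau n a ` (Q_Delta n a \<Delta> :: (nat \<Rightarrow> nat, 'k) mpoly set)
           \<subseteq> saturation (I_Delta n a \<Delta>) (xsum n a (\<lambda>_. 0))"
proof -
  have c1: "\<forall>g\<in>ideal_pow (margin_ideal n a (\<Inter>(facets \<Delta>))) s. g * tau n a f \<in> I_Delta n a \<Delta>"
    using conj1[OF assms(3,4,5)] by blast
  have c3: "tau n a ` (Q_Delta n a \<Delta> :: (nat \<Rightarrow> nat, 'k) mpoly set) \<subseteq> saturation (I_Delta n a \<Delta>) (xsum n a (\<lambda>_. 0))"
    using sat[OF assms(1,3)] by blast
  show ?thesis using c1 c3 unfolding ideal_quot_def by blast
qed

end
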